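(* Let $E$ be an infinite dimensional separable real Hilbert space, let $\mu,\nu\in\mathcal{W}_2(E)$, and put $\sigma:=d_{\mathcal{W}_2}(\mu,\delta_{m(\mu)})$ and $\varrho:=d_{\mathcal{W}_2}(\nu,\delta_{m(\nu)})$. Then $$d_{\mathcal{W}_2}^2(\mu,\nu)=\|m(\mu)-m(\nu)\|^2+\sigma^2+\varrho^2$$ holds if and only if there exist two orthogonal closed affine subspaces $L$ and $M$ of $E$ with $\mathrm{supp}(\mu)\subseteq L$ and $\mathrm{supp}(\nu)\subseteq M$.
   Context: $\mathcal{W}_2(E)$ is the set of Borel probability measures $\mu$ on $E$ with $\int_E\|x\|^2\,d\mu(x)<\infty$, with $d_{\mathcal{W}_2}(\mu,\nu)=\big(\inf_{\pi\in\Pi(\mu,\nu)}\int_{E\times E}\|x-y\|^2\,d\pi(x,y)\big)^{1/2}$, $\Pi(\mu,\nu)$ the set of couplings of $\mu,\nu$. The barycenter $m(\mu)\in E$ is the point with $\langle m(\mu),z\rangle=\int_E\langle x,z\rangle\,d\mu(x)$ for all $z\in E$. The support $\mathrm{supp}(\mu)$ is the smallest closed set every open neighbourhood of each of whose points has positive measure. Two affine subspaces $a+L_0$, $b+M_0$ ($L_0,M_0$ closed linear subspaces) are orthogonal if $L_0\perp M_0$. *)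

theory Defs
  imports "HOL-Analysis.Analysis" "HOL-Probability.Probability"
begin

definition separable_space :: "'a::metric_space itself \<Rightarrow> bool" where
  "separable_space _ \<longleftrightarrow> (\<exists>D::'a set. countable D \<and> closure D = UNIV)"

definition infinite_dimensional :: "'a::real_vector itself \<Rightarrow> bool" where
  "infinite_dimensional _ \<longleftrightarrow> \<not> (\<exists>B::'a set. finite B \<and> span B = UNIV)"

definition W2 :: "'a::real_inner measure set" where
  "W2 = {\<mu>. sets \<mu> = sets borel \<and> prob_space \<mu> \<and> integrable \<mu> (\<lambda>x. (norm x)^2)}"

definition couplings :: "'a::real_inner measure \<Rightarrow> 'a measure \<Rightarrow> ('a \<times> 'a) measure set" where
  "couplings \<mu> \<nu> = {\<pi>. sets \<pi> = sets (borel \<Otimes>\<^sub>M borel) \<and> prob_space \<pi> \<and>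
      distr \<pi> borel fst = \<mu> \<and> distr \<pi> borel snd = \<nu>}"

definition wdist :: "'a::real_inner measure \<Rightarrow> 'a measure \<Rightarrow> real" where
  "wdist \<mu> \<nu> = sqrt (enn2real (INF \<pi>\<in>couplings \<mu> \<nu>.
      \<integral>\<^sup>+ p. ennreal ((norm (fst p - snd p))^2) \<partial>\<pi>))"

definition bary :: "'a::real_inner measure \<Rightarrow> 'a" where
  "bary \<mu> = (THE m. \<forall>z. m \<bullet> z = (\<integral>x. x \<bullet> z \<partial>\<mu>))"

definition supp :: "'a::topological_space measure \<Rightarrow> 'a set" where
  "supp \<mu> = {x. \<forall>U. open U \<and> x \<in> U \<longrightarrow> emeasure \<mu> U > 0}"

end

theory Submission
  imports Defs
begin
lemma riesz_bounded:
  fixes l :: "'a::{real_inner,complete_space} \<Rightarrow> real"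
  assumes add: "\<And>x y. l (x+y) = l x + l y" and scale: "\<And>c x. l (c *\<^sub>R x) = c * l x"
    and bnd0: "\<And>x. \<bar>l x\<bar> \<le> K0 * norm x"
  shows "\<exists>m. \<forall>z. m \<bullet> z = l z"
proof -
  define K where "K = max K0 0"
  have K0: "K \<ge> 0" unfolding K_def by simp
  have bnd: "\<bar>l x\<bar> \<le> K * norm x" for x
    using bnd0[of x] unfolding K_def by (meson max.cobounded1 mult_right_mono norm_ge_zero order_trans)
  have diff: "l (x - y) = l x - l y" for x y
    using add[of "x - y" y] by simp
  define J where "J m = m \<bullet> m - 2 * l m" for m
  have Jlow: "J m \<ge> - (K^2)" for m
  proof -
    have "l m \<le> K * norm m" using bnd[of m] by simp
    moreover have "m \<bullet> m = (norm m)^2" by (simp add: power2_norm_eq_inner)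
    moreover have "(norm m)^2 - 2 * (K * norm m) \<ge> - (K^2)"
      using zero_le_power2[of "norm m - K"] unfolding power2_diff by (simp add: algebra_simps)
    ultimately show ?thesis unfolding J_def by linarith
  qed
  define I where "I = Inf (range J)"
  have bdd: "bdd_below (range J)" using Jlow by (intro bdd_belowI[of _ "-(K^2)"]) auto
  have IJ: "I \<le> J x" for x unfolding I_def using bdd by (simp add: cInf_lower)
  have "\<exists>m. J m < I + 1 / (real n + 1)" for n
  proof -
    have "Inf (range J) < I + 1 / (real n + 1)" unfolding I_def by simp
    then show ?thesis using cInf_lessD[of "range J"] by auto
  qed
  then obtain ms where ms: "\<And>n. J (ms n) < I + 1 / (real n + 1)" by metis
  have par: "(norm (x - y))^2 = 2 * J x + 2 * J y - 4 * J ((1/2) *\<^sub>R (x + y))" for x y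
  proof -
    have "l ((1/2) *\<^sub>R (x + y)) = (1/2) * (l x + l y)" by (simp add: scale add)
    moreover have "(norm (x - y))^2 = x \<bullet> x - 2 * (x \<bullet> y) + y \<bullet> y"
      by (simp add: power2_norm_eq_inner inner_diff_left inner_diff_right inner_commute)
    moreover have "((1/2) *\<^sub>R (x + y)) \<bullet> ((1/2) *\<^sub>R (x + y)) = (1/4) * (x \<bullet> x + 2 * (x \<bullet> y) + y \<bullet> y)"
      by (simp add: inner_add_left inner_add_right inner_commute)
    ultimately show ?thesis unfolding J_def by (simp add: algebra_simps)
  qed
  have cd: "(norm (ms i - ms j))^2 \<le> 2 / (real i + 1) + 2 / (real j + 1)" for i j
    using par[of "ms i" "ms j"] ms[of i] ms[of j] IJ[of "(1/2) *\<^sub>R (ms i + ms j)"] by linarith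
  have "Cauchy ms"
  proof (rule metric_CauchyI)
    fix e :: real assume e: "e > 0"
    obtain M :: nat where M: "4 / (e^2) < real M" using reals_Archimedean2 by blast
    have Mp: "4 / (real M + 1) < e^2"
    proof -
      have "4 < real M * e^2" using M e by (simp add: field_simps)
      then have "4 < (real M + 1) * e^2" using e by (smt (verit) mult_right_mono zero_le_power2)
      then show ?thesis by (simp add: field_simps)
    qed
    show "\<exists>M. \<forall>m\<ge>M. \<forall>n\<ge>M. dist (ms m) (ms n) < e"
    proof (intro exI allI impI)
      fix i j assume ij: "M \<le> i" "M \<le> j"
      have "2 / (real i + 1) \<le> 2 / (real M + 1)" "2 / (real j + 1) \<le> 2 / (real M + 1)"
        using ij by (auto intro!: divide_left_mono)
      then have "(norm (ms i - ms j))^2 < e^2" using cd[of i j] Mp by linarith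
      then have "norm (ms i - ms j) < e" using e by (simp add: power_less_imp_less_base)
      then show "dist (ms i) (ms j) < e" by (simp add: dist_norm)
    qed
  qed
  then obtain m where lim: "ms \<longlonglongrightarrow> m" using Cauchy_convergent_iff convergent_def by blast
  have llim: "(\<lambda>n. l (ms n)) \<longlonglongrightarrow> l m"
  proof (rule tendsto_sandwich[where f="\<lambda>n. l m - K * norm (ms n - m)" and h="\<lambda>n. l m + K * norm (ms n - m)"])
    show "\<forall>\<^sub>F n in sequentially. l m - K * norm (ms n - m) \<le> l (ms n)"
      using bnd diff by (auto intro!: always_eventually) (smt (verit) bnd diff)
    show "\<forall>\<^sub>F n in sequentially. l (ms n) \<le> l m + K * norm (ms n - m)"
      by (auto intro!: always_eventually) (smt (verit) bnd diff)
    have "(\<lambda>n. norm (ms n - m)) \<longlonglongrightarrow> 0" using lim by (simp add: LIM_zero_iff tendsto_norm_zero)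
    then show "(\<lambda>n. l m - K * norm (ms n - m)) \<longlonglongrightarrow> l m" "(\<lambda>n. l m + K * norm (ms n - m)) \<longlonglongrightarrow> l m"
      using lim by (auto intro!: tendsto_eq_intros)
  qed
  have Jlim: "(\<lambda>n. J (ms n)) \<longlonglongrightarrow> J m"
    unfolding J_def by (intro tendsto_intros lim llim)
  have Jmin: "J m \<le> J x" for x
  proof -
    have "(\<lambda>n. J x + 1 / (real n + 1)) \<longlonglongrightarrow> J x + 0"
      by (intro tendsto_intros) (use LIMSEQ_inverse_real_of_nat in \<open>simp add: inverse_eq_divide add.commute\<close>)
    moreover have "\<exists>N. \<forall>n\<ge>N. J (ms n) \<le> J x + 1 / (real n + 1)"
      using ms IJ[of x] by (intro exI[of _ 0]) (smt (verit))
    ultimately show ?thesis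
      using Jlim LIMSEQ_le[of "\<lambda>n. J (ms n)" "J m" "\<lambda>n. J x + 1 / (real n + 1)" "J x + 0"] by simp
  qed
  show ?thesis
  proof (intro exI allI)
    fix z
    define a where "a = m \<bullet> z - l z"
    define b where "b = z \<bullet> z"
    have b0: "b \<ge> 0" unfolding b_def by simp
    have "J (m + t *\<^sub>R z) = J m + 2 * t * a + t^2 * b" for t
      unfolding J_def a_def b_def
      by (simp add: add scale inner_add_left inner_add_right inner_commute algebra_simps power2_eq_square)
    then have ge: "2 * t * a + t^2 * b \<ge> 0" for t using Jmin[of "m + t *\<^sub>R z"] by simp
    show "m \<bullet> z = l z"
    proof (rule ccontr)
      assume "m \<bullet> z \<noteq> l z"
      then have a0: "a \<noteq> 0" unfolding a_def by simp
      define t where "t = - a / (b + 1)"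
      have "2 * t * a + t^2 * b = a^2 * (b - 2 * (b + 1)) / (b+1)^2"
        unfolding t_def using b0 by (simp add: field_simps power2_eq_square add_nonneg_eq_0_iff)
      also have "\<dots> < 0" using a0 b0 by (intro divide_neg_pos mult_pos_neg) auto
      finally show False using ge[of t] by linarith
    qed
  qed
qed

lemma sep_dense:
  assumes "separable_space TYPE('a::metric_space)"
  obtains D :: "'a::metric_space set" where "countable D" "\<And>(x::'a) e. e > 0 \<Longrightarrow> \<exists>d\<in>D. dist d x < e"
proof -
  obtain D :: "'a set" where D: "countable D" "closure D = UNIV"
    using assms unfolding separable_space_def by blast
  show ?thesis
  proof (rule that[of D])
    show "countable D" by (rule D(1))
    fix x :: 'a and e :: real assume "e > 0"
    then show "\<exists>d\<in>D. dist d x < e" using closure_approachable[of x D] D(2) by auto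
  qed
qed

lemma dist_meas:
  assumes "separable_space TYPE('a::metric_space)"
  shows "(\<lambda>p::'a\<times>'a. dist (fst p) (snd p)) \<in> borel_measurable (borel \<Otimes>\<^sub>M borel)"
proof -
  obtain D :: "'a set" where D: "countable D" "\<And>x e. e > 0 \<Longrightarrow> \<exists>d\<in>D. dist d x < e"
    using sep_dense[OF assms] by blast
  show ?thesis unfolding borel_measurable_iff_less
  proof
    fix r :: real
    define X where "X = {(d,q,q'). d \<in> D \<and> q \<in> \<rat> \<and> q' \<in> \<rat> \<and> q + q' < r}"
    have cX: "countable X"
      by (rule countable_subset[of _ "D \<times> \<rat> \<times> \<rat>"]) (auto simp: X_def D countable_rat)
    have eq: "{w \<in> space (borel \<Otimes>\<^sub>M borel). dist (fst (w::'a\<times>'a)) (snd w) < r} = (\<Union>(d,q,q')\<in>X. ball d q \<times> ball d q')"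
    proof -
      have "{w \<in> space (borel \<Otimes>\<^sub>M borel). dist (fst w) (snd w) < r} =
      (\<Union>(d,q,q')\<in>X. ball d q \<times> ball d q')"
    proof (intro equalityI subsetI)
      fix w :: "'a \<times> 'a" assume "w \<in> {w \<in> space (borel \<Otimes>\<^sub>M borel). dist (fst w) (snd w) < r}"
      then obtain x y where w: "w = (x,y)" and xy: "dist x y < r" by (cases w) auto
      define e where "e = (r - dist x y) / 4"
      have e: "e > 0" using xy by (simp add: e_def)
      obtain d where d: "d \<in> D" "dist d x < e" using D(2)[OF e] by blast
      obtain q where q: "q \<in> \<rat>" "e < q" "q < 2 * e" using Rats_dense_in_real[of e "2*e"] e by auto
      obtain q' where q': "q' \<in> \<rat>" "e + dist x y < q'" "q' < 2 * e + dist x y"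
        using Rats_dense_in_real[of "e + dist x y" "2*e + dist x y"] e by auto
      have "dist d y \<le> dist d x + dist x y" by (rule dist_triangle)
      moreover have "4 * e = r - dist x y" unfolding e_def by simp
      ultimately have "q + q' < r" "dist d y < q'" "dist d x < q" using d q q' e by linarith+
      then have "(d,q,q') \<in> X" "x \<in> ball d q" "y \<in> ball d q'"
        using d q q' unfolding X_def by (auto simp: mem_ball)
      then show "w \<in> (\<Union>(d,q,q')\<in>X. ball d q \<times> ball d q')" using w by blast
    next
      fix w :: "'a \<times> 'a" assume "w \<in> (\<Union>(d,q,q')\<in>X. ball d q \<times> ball d q')"
      then obtain d q q' where "(d,q,q') \<in> X" "fst w \<in> ball d q" "snd w \<in> ball d q'" by auto
      then have "dist d (fst w) < q" "dist d (snd w) < q'" "q + q' < r" by (auto simp: X_def mem_ball)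
      moreover have "dist (fst w) (snd w) \<le> dist d (fst w) + dist d (snd w)" by (rule dist_triangle3)
      ultimately show "w \<in> {w \<in> space (borel \<Otimes>\<^sub>M borel). dist (fst w) (snd w) < r}"
        by (simp add: space_pair_measure)
    qed
    then show ?thesis by simp
    qed
    show "{w \<in> space (borel \<Otimes>\<^sub>M borel). dist (fst (w::'a\<times>'a)) (snd w) < r} \<in> sets (borel \<Otimes>\<^sub>M borel)"
      unfolding eq using cX by (intro sets.countable_UN'') auto
  qed
qed

lemma dist_meas':
  assumes "separable_space TYPE('a::metric_space)"
    and f: "f \<in> measurable M (borel :: 'a measure)" and g: "g \<in> measurable M (borel :: 'a measure)"
  shows "(\<lambda>w. dist (f w) (g w)) \<in> borel_measurable M"
proof -
  have "(\<lambda>w. (f w, g w)) \<in> measurable M (borel \<Otimes>\<^sub>M borel)" using f g by measurable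
  from measurable_compose[OF this dist_meas[OF assms(1)]] show ?thesis by simp
qed

lemma inner_meas:
  fixes f g :: "_ \<Rightarrow> 'a::real_inner"
  assumes "separable_space TYPE('a)"
    and f: "f \<in> measurable M borel" and g: "g \<in> measurable M borel"
  shows "(\<lambda>w. f w \<bullet> g w) \<in> borel_measurable M"
proof -
  have e: "f w \<bullet> g w = ((dist (f w) 0)^2 + (dist (g w) 0)^2 - (dist (f w) (g w))^2) / 2" for w
    by (simp add: dist_norm power2_norm_eq_inner inner_diff_left inner_diff_right inner_commute)
  have [measurable]: "(\<lambda>w. dist (f w) (g w)) \<in> borel_measurable M" "(\<lambda>w. dist (f w) 0) \<in> borel_measurable M"
    "(\<lambda>w. dist (g w) 0) \<in> borel_measurable M"
    using dist_meas'[OF assms(1) f g] dist_meas'[OF assms(1) f, of "\<lambda>_. 0"] dist_meas'[OF assms(1) g, of "\<lambda>_. 0"]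
    by auto
  show ?thesis unfolding e by measurable
qed

lemma W2D:
  assumes "\<mu> \<in> W2"
  shows "sets \<mu> = sets borel" "prob_space \<mu>" "integrable \<mu> (\<lambda>x. (norm x)^2)"
  using assms unfolding W2_def by auto

lemma w2_meas:
  assumes "\<mu> \<in> W2" "f \<in> borel_measurable borel"
  shows "f \<in> borel_measurable \<mu>"
proof -
  have "measurable \<mu> (borel::'b measure) = measurable borel borel"
    by (rule measurable_cong_sets) (simp_all add: W2D(1)[OF assms(1)])
  then show ?thesis using assms(2) by simp
qed

lemma cont_meas:
  assumes "continuous_on UNIV f"
  shows "f \<in> borel_measurable borel"
  using assms by (rule borel_measurable_continuous_onI)

lemma w2_int_norm:
  fixes \<mu> :: "'a::real_inner measure"
  assumes "\<mu> \<in> W2"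
  shows "integrable \<mu> (\<lambda>x. norm x)"
proof -
  interpret prob_space \<mu> using W2D[OF assms] by simp
  have "integrable \<mu> (\<lambda>x. 1 + (norm x)^2)" using W2D[OF assms] by simp
  moreover have "(\<lambda>x. norm x) \<in> borel_measurable \<mu>"
    by (rule w2_meas[OF assms]) (intro cont_meas continuous_intros)
  moreover have "AE x in \<mu>. norm (norm x) \<le> norm (1 + (norm x)^2)"
  proof (rule AE_I2)
    fix x :: 'a
    have "norm x \<le> 1 + (norm x)^2"
      using zero_le_power2[of "norm x - 1/2"] unfolding power2_diff by (simp add: power2_eq_square)
    then show "norm (norm x) \<le> norm (1 + (norm x)^2)" by simp
  qed
  ultimately show ?thesis by (rule Bochner_Integration.integrable_bound)
qed

lemma w2_int_norm2:
  fixes \<mu> :: "'a::real_inner measure"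
  assumes "\<mu> \<in> W2"
  shows "integrable \<mu> (\<lambda>x. (norm (x - a))^2)"
proof -
  interpret prob_space \<mu> using W2D[OF assms] by simp
  have "integrable \<mu> (\<lambda>x. 2 * (norm x)^2 + 2 * (norm a)^2)" using W2D[OF assms] by simp
  moreover have "(\<lambda>x. (norm (x - a))^2) \<in> borel_measurable \<mu>"
    by (rule w2_meas[OF assms]) (intro cont_meas continuous_intros)
  moreover have "AE x in \<mu>. norm ((norm (x - a))^2) \<le> norm (2 * (norm x)^2 + 2 * (norm a)^2)"
  proof (rule AE_I2)
    fix x :: 'a
    have "norm (x - a) \<le> norm x + norm a" by (rule norm_triangle_ineq4)
    then have "(norm (x - a))^2 \<le> (norm x + norm a)^2" by (simp add: power_mono)
    also have "\<dots> \<le> 2 * (norm x)^2 + 2 * (norm a)^2"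
      using zero_le_power2[of "norm x - norm a"] unfolding power2_diff power2_sum by linarith
    finally show "norm ((norm (x - a))^2) \<le> norm (2 * (norm x)^2 + 2 * (norm a)^2)" by simp
  qed
  ultimately show ?thesis by (rule Bochner_Integration.integrable_bound)
qed

lemma w2_int_lin:
  fixes \<mu> :: "'a::real_inner measure"
  assumes "\<mu> \<in> W2" "h \<in> borel_measurable borel" "\<And>x. \<bar>h x\<bar> \<le> 1"
  shows "integrable \<mu> (\<lambda>x. h x * (x \<bullet> z))"
proof -
  have "integrable \<mu> (\<lambda>x. norm x * norm z)" using w2_int_norm[OF assms(1)] by simp
  moreover have "(\<lambda>x. h x * (x \<bullet> z)) \<in> borel_measurable \<mu>"
  proof (rule borel_measurable_times)
    show "h \<in> borel_measurable \<mu>" by (rule w2_meas[OF assms(1,2)])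
    show "(\<lambda>x. x \<bullet> z) \<in> borel_measurable \<mu>"
      by (rule w2_meas[OF assms(1)]) (intro cont_meas continuous_intros)
  qed
  moreover have "AE x in \<mu>. norm (h x * (x \<bullet> z)) \<le> norm (norm x * norm z)"
  proof (rule AE_I2)
    fix x
    have "\<bar>h x * (x \<bullet> z)\<bar> = \<bar>h x\<bar> * \<bar>x \<bullet> z\<bar>" by (simp add: abs_mult)
    also have "\<dots> \<le> 1 * (norm x * norm z)"
      using assms(3)[of x] Cauchy_Schwarz_ineq2[of x z] by (intro mult_mono) auto
    finally show "norm (h x * (x \<bullet> z)) \<le> norm (norm x * norm z)" by simp
  qed
  ultimately show ?thesis by (rule Bochner_Integration.integrable_bound)
qed

lemma w2_vec:
  fixes \<mu> :: "'a::{real_inner,complete_space} measure"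
  assumes "\<mu> \<in> W2" "h \<in> borel_measurable borel" "\<And>x. \<bar>h x\<bar> \<le> 1"
  shows "\<exists>v. \<forall>z. v \<bullet> z = (\<integral>x. h x * (x \<bullet> z) \<partial>\<mu>)"
proof (rule riesz_bounded)
  note int = w2_int_lin[OF assms]
  show "(\<integral>x. h x * (x \<bullet> (y + w)) \<partial>\<mu>) = (\<integral>x. h x * (x \<bullet> y) \<partial>\<mu>) + (\<integral>x. h x * (x \<bullet> w) \<partial>\<mu>)" for y w
    using int[of y] int[of w] by (simp add: inner_add_right distrib_left)
  show "(\<integral>x. h x * (x \<bullet> (c *\<^sub>R y)) \<partial>\<mu>) = c * (\<integral>x. h x * (x \<bullet> y) \<partial>\<mu>)" for c y
  proof -
    have "(\<integral>x. h x * (x \<bullet> (c *\<^sub>R y)) \<partial>\<mu>) = (\<integral>x. c * (h x * (x \<bullet> y)) \<partial>\<mu>)"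
      by (rule Bochner_Integration.integral_cong) (simp_all add: algebra_simps)
    then show ?thesis by simp
  qed
  show "\<bar>\<integral>x. h x * (x \<bullet> y) \<partial>\<mu>\<bar> \<le> (\<integral>x. norm x \<partial>\<mu>) * norm y" for y
  proof -
    have "\<bar>\<integral>x. h x * (x \<bullet> y) \<partial>\<mu>\<bar> \<le> (\<integral>x. \<bar>h x * (x \<bullet> y)\<bar> \<partial>\<mu>)"
      by (rule integral_abs_bound)
    also have "\<dots> \<le> (\<integral>x. norm x * norm y \<partial>\<mu>)"
    proof (rule integral_mono)
      show "integrable \<mu> (\<lambda>x. \<bar>h x * (x \<bullet> y)\<bar>)" using int[of y] by simp
      show "integrable \<mu> (\<lambda>x. norm x * norm y)" using w2_int_norm[OF assms(1)] by simp
      fix x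
      have "\<bar>h x * (x \<bullet> y)\<bar> = \<bar>h x\<bar> * \<bar>x \<bullet> y\<bar>" by (simp add: abs_mult)
      also have "\<dots> \<le> 1 * (norm x * norm y)"
        using assms(3)[of x] Cauchy_Schwarz_ineq2[of x y] by (intro mult_mono) auto
      finally show "\<bar>h x * (x \<bullet> y)\<bar> \<le> norm x * norm y" by simp
    qed
    finally show ?thesis by simp
  qed
qed

lemma bary_eq:
  fixes \<mu> :: "'a::{real_inner,complete_space} measure"
  assumes "\<mu> \<in> W2"
  shows "bary \<mu> \<bullet> z = (\<integral>x. x \<bullet> z \<partial>\<mu>)"
proof -
  obtain v where v: "\<forall>z. v \<bullet> z = (\<integral>x. 1 * (x \<bullet> z) \<partial>\<mu>)"
    using w2_vec[OF assms, of "\<lambda>_. 1"] by auto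
  have "\<exists>!m. \<forall>z. m \<bullet> z = (\<integral>x. x \<bullet> z \<partial>\<mu>)"
  proof
    show "\<forall>z. v \<bullet> z = (\<integral>x. x \<bullet> z \<partial>\<mu>)" using v by simp
    fix m assume m: "\<forall>z. m \<bullet> z = (\<integral>x. x \<bullet> z \<partial>\<mu>)"
    have "(m - v) \<bullet> (m - v) = 0" using m v by (simp add: inner_diff_left)
    then show "m = v" by simp
  qed
  then have "\<forall>z. bary \<mu> \<bullet> z = (\<integral>x. x \<bullet> z \<partial>\<mu>)" unfolding bary_def by (rule theI')
  then show ?thesis by simp
qed

lemma bary_int:
  fixes \<mu> :: "'a::{real_inner,complete_space} measure"
  assumes "\<mu> \<in> W2"
  shows "integrable \<mu> (\<lambda>x. (x - a) \<bullet> z)" "(\<integral>x. (x - a) \<bullet> z \<partial>\<mu>) = (bary \<mu> - a) \<bullet> z"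
proof -
  interpret prob_space \<mu> using W2D[OF assms] by simp
  have i: "integrable \<mu> (\<lambda>x. x \<bullet> z)" using w2_int_lin[OF assms, of "\<lambda>_. 1"] by simp
  then show "integrable \<mu> (\<lambda>x. (x - a) \<bullet> z)" by (simp add: inner_diff_left)
  show "(\<integral>x. (x - a) \<bullet> z \<partial>\<mu>) = (bary \<mu> - a) \<bullet> z"
    using i by (simp add: inner_diff_left bary_eq[OF assms] prob_space)
qed

lemma cplD:
  assumes "\<pi> \<in> couplings \<mu> \<nu>"
  shows "sets \<pi> = sets (borel \<Otimes>\<^sub>M borel)" "prob_space \<pi>" "distr \<pi> borel fst = \<mu>" "distr \<pi> borel snd = \<nu>"
  using assms unfolding couplings_def by auto

lemma cpl_meas:
  assumes "\<pi> \<in> couplings \<mu> \<nu>" "f \<in> measurable (borel \<Otimes>\<^sub>M borel) N"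
  shows "f \<in> measurable \<pi> N"
proof -
  have "measurable \<pi> N = measurable (borel \<Otimes>\<^sub>M borel) N"
    by (rule measurable_cong_sets) (simp_all add: cplD(1)[OF assms(1)])
  then show ?thesis using assms(2) by simp
qed

lemma cpl_fst: "\<pi> \<in> couplings \<mu> \<nu> \<Longrightarrow> fst \<in> measurable \<pi> borel"
  by (rule cpl_meas) auto

lemma cpl_snd: "\<pi> \<in> couplings \<mu> \<nu> \<Longrightarrow> snd \<in> measurable \<pi> borel"
  by (rule cpl_meas) auto

lemma cpl_fst_f: "\<pi> \<in> couplings \<mu> \<nu> \<Longrightarrow> f \<in> measurable borel N \<Longrightarrow> (\<lambda>p. f (fst p)) \<in> measurable \<pi> N"
  using measurable_compose[OF cpl_fst] by blast

lemma cpl_snd_f: "\<pi> \<in> couplings \<mu> \<nu> \<Longrightarrow> f \<in> measurable borel N \<Longrightarrow> (\<lambda>p. f (snd p)) \<in> measurable \<pi> N"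
  using measurable_compose[OF cpl_snd] by blast

lemma cpl_int_fst:
  fixes f :: "'a::real_inner \<Rightarrow> real"
  assumes "\<pi> \<in> couplings \<mu> \<nu>" "f \<in> borel_measurable borel" "integrable \<mu> f"
  shows "integrable \<pi> (\<lambda>p. f (fst p))" "(\<integral>p. f (fst p) \<partial>\<pi>) = (\<integral>x. f x \<partial>\<mu>)"
proof -
  have d: "distr \<pi> borel fst = \<mu>" by (rule cplD(3)[OF assms(1)])
  show "integrable \<pi> (\<lambda>p. f (fst p))"
    using integrable_distr_eq[OF cpl_fst[OF assms(1)] assms(2)] assms(3) d by simp
  show "(\<integral>p. f (fst p) \<partial>\<pi>) = (\<integral>x. f x \<partial>\<mu>)"
    using integral_distr[OF cpl_fst[OF assms(1)] assms(2)] d by simp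
qed

lemma cpl_int_snd:
  fixes f :: "'a::real_inner \<Rightarrow> real"
  assumes "\<pi> \<in> couplings \<mu> \<nu>" "f \<in> borel_measurable borel" "integrable \<nu> f"
  shows "integrable \<pi> (\<lambda>p. f (snd p))" "(\<integral>p. f (snd p) \<partial>\<pi>) = (\<integral>x. f x \<partial>\<nu>)"
proof -
  have d: "distr \<pi> borel snd = \<nu>" by (rule cplD(4)[OF assms(1)])
  show "integrable \<pi> (\<lambda>p. f (snd p))"
    using integrable_distr_eq[OF cpl_snd[OF assms(1)] assms(2)] assms(3) d by simp
  show "(\<integral>p. f (snd p) \<partial>\<pi>) = (\<integral>x. f x \<partial>\<nu>)"
    using integral_distr[OF cpl_snd[OF assms(1)] assms(2)] d by simp
qed

lemma cpl_nn_fst: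
  assumes "\<pi> \<in> couplings \<mu> \<nu>" "f \<in> borel_measurable borel"
  shows "(\<integral>\<^sup>+p. f (fst p) \<partial>\<pi>) = (\<integral>\<^sup>+x. f x \<partial>\<mu>)"
proof -
  have "(\<integral>\<^sup>+x. f x \<partial>(distr \<pi> borel fst)) = (\<integral>\<^sup>+p. f (fst p) \<partial>\<pi>)"
    by (rule nn_integral_distr[OF cpl_fst[OF assms(1)]]) (simp add: assms(2))
  then show ?thesis by (simp add: cplD(3)[OF assms(1)])
qed

lemma cpl_AE_fst:
  assumes "\<pi> \<in> couplings \<mu> \<nu>" "AE x in \<mu>. P x" "{x. P x} \<in> sets borel"
  shows "AE p in \<pi>. P (fst p)"
proof -
  have "AE x in distr \<pi> borel fst. P x" by (subst cplD(3)[OF assms(1)]) (rule assms(2))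
  then show ?thesis using AE_distr_iff[OF cpl_fst[OF assms(1)], of P] assms(3) by simp
qed

lemma cpl_AE_snd:
  assumes "\<pi> \<in> couplings \<mu> \<nu>" "AE x in \<nu>. P x" "{x. P x} \<in> sets borel"
  shows "AE p in \<pi>. P (snd p)"
proof -
  have "AE x in distr \<pi> borel snd. P x" by (subst cplD(4)[OF assms(1)]) (rule assms(2))
  then show ?thesis using AE_distr_iff[OF cpl_snd[OF assms(1)], of P] assms(3) by simp
qed

lemma norm_expand:
  fixes A B d :: "'a::real_inner"
  shows "(norm (A - B + d))^2 = (norm A)^2 + (norm B)^2 + (norm d)^2 - 2*(A \<bullet> B) + 2*(A \<bullet> d) - 2*(B \<bullet> d)"
proof -
  have "(norm (A - B + d))^2 = (A - B + d) \<bullet> (A - B + d)" by (simp add: power2_norm_eq_inner)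
  also have "\<dots> = A \<bullet> A + B \<bullet> B + d \<bullet> d - 2*(A \<bullet> B) + 2*(A \<bullet> d) - 2*(B \<bullet> d)"
    by (simp add: inner_diff_left inner_diff_right inner_add_left inner_add_right inner_commute)
  finally show ?thesis by (simp add: power2_norm_eq_inner)
qed

lemma cpl_inner:
  fixes \<mu> \<nu> :: "'a::{real_inner,complete_space} measure"
  assumes sep: "separable_space TYPE('a)" and W: "\<mu> \<in> W2" "\<nu> \<in> W2" and pi: "\<pi> \<in> couplings \<mu> \<nu>"
  shows "integrable \<pi> (\<lambda>p. (fst p - a) \<bullet> (snd p - b))"
    "(\<integral>p. (fst p - a) \<bullet> (snd p - b) \<partial>\<pi>) =
       (\<integral>p. (fst p - bary \<mu>) \<bullet> (snd p - bary \<nu>) \<partial>\<pi>) + (bary \<mu> - a) \<bullet> (bary \<nu> - b)"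
proof -
  have gen: "integrable \<pi> (\<lambda>p. (fst p - a') \<bullet> (snd p - b'))" for a' b'
  proof -
    have m: "(\<lambda>p. (fst p - a') \<bullet> (snd p - b')) \<in> borel_measurable \<pi>"
    proof (rule inner_meas[OF sep])
      have "(\<lambda>x. x - a') \<in> borel_measurable borel" by (intro cont_meas continuous_intros)
      then show "(\<lambda>p. fst p - a') \<in> borel_measurable \<pi>" by (rule cpl_fst_f[OF pi])
      have "(\<lambda>x. x - b') \<in> borel_measurable borel" by (intro cont_meas continuous_intros)
      then show "(\<lambda>p. snd p - b') \<in> borel_measurable \<pi>" by (rule cpl_snd_f[OF pi])
    qed
    have i1: "integrable \<pi> (\<lambda>p. (norm (fst p - a'))^2)"
      by (rule cpl_int_fst[OF pi _ w2_int_norm2[OF W(1)]]) (intro cont_meas continuous_intros)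
    have i2: "integrable \<pi> (\<lambda>p. (norm (snd p - b'))^2)"
      by (rule cpl_int_snd[OF pi _ w2_int_norm2[OF W(2)]]) (intro cont_meas continuous_intros)
    have "AE p in \<pi>. norm ((fst p - a') \<bullet> (snd p - b')) \<le> norm ((norm (fst p - a'))^2 + (norm (snd p - b'))^2)"
    proof (rule AE_I2)
      fix p :: "'a \<times> 'a"
      have "\<bar>(fst p - a') \<bullet> (snd p - b')\<bar> \<le> norm (fst p - a') * norm (snd p - b')"
        by (rule Cauchy_Schwarz_ineq2)
      also have "\<dots> \<le> (norm (fst p - a'))^2 + (norm (snd p - b'))^2"
      proof -
        define u where "u = norm (fst p - a')"
        define v where "v = norm (snd p - b')"
        have "0 \<le> u * v" unfolding u_def v_def by simp
        moreover have "0 \<le> u^2 + v^2 - 2 * (u * v)" using zero_le_power2[of "u - v"] unfolding power2_diff by (simp add: algebra_simps)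
        ultimately have "u * v \<le> u^2 + v^2" by linarith
        then show ?thesis unfolding u_def v_def .
      qed
      finally show "norm ((fst p - a') \<bullet> (snd p - b')) \<le> norm ((norm (fst p - a'))^2 + (norm (snd p - b'))^2)"
        by simp
    qed
    then show ?thesis using i1 i2 m by (intro Bochner_Integration.integrable_bound[OF Bochner_Integration.integrable_add[OF i1 i2] m]) auto
  qed
  then show "integrable \<pi> (\<lambda>p. (fst p - a) \<bullet> (snd p - b))" .
  let ?m = "bary \<mu>" and ?n = "bary \<nu>"
  have e: "(fst p - a) \<bullet> (snd p - b) = (fst p - ?m) \<bullet> (snd p - ?n) + ((fst p - ?m) \<bullet> (?n - b) + (snd p - b) \<bullet> (?m - a))" for p
  proof -
    have "(fst p - a) \<bullet> (snd p - b) = ((fst p - ?m) + (?m - a)) \<bullet> ((snd p - ?n) + (?n - b))" by simp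
    also have "\<dots> = (fst p - ?m) \<bullet> (snd p - ?n) + (fst p - ?m) \<bullet> (?n - b) + ((?m - a) \<bullet> (snd p - ?n) + (?m - a) \<bullet> (?n - b))"
      by (simp only: inner_add_left inner_add_right)
    also have "(?m - a) \<bullet> (snd p - ?n) + (?m - a) \<bullet> (?n - b) = (snd p - b) \<bullet> (?m - a)"
      by (simp add: inner_diff_left inner_diff_right inner_commute)
    finally show ?thesis by simp
  qed
  have c1: "(\<lambda>x. (x - ?m) \<bullet> (?n - b)) \<in> borel_measurable borel" by (intro cont_meas continuous_intros)
  have c2: "(\<lambda>x. (x - b) \<bullet> (?m - a)) \<in> borel_measurable borel" by (intro cont_meas continuous_intros)
  have j1: "integrable \<pi> (\<lambda>p. (fst p - ?m) \<bullet> (?n - b))" "(\<integral>p. (fst p - ?m) \<bullet> (?n - b) \<partial>\<pi>) = 0"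
    using cpl_int_fst[OF pi c1 bary_int(1)[OF W(1), of ?m "?n - b"]] bary_int(2)[OF W(1), of ?m "?n - b"]
    by auto
  have j2: "integrable \<pi> (\<lambda>p. (snd p - b) \<bullet> (?m - a))" "(\<integral>p. (snd p - b) \<bullet> (?m - a) \<partial>\<pi>) = (?n - b) \<bullet> (?m - a)"
    using cpl_int_snd[OF pi c2 bary_int(1)[OF W(2), of b "?m - a"]] bary_int(2)[OF W(2), of b "?m - a"]
    by auto
  show "(\<integral>p. (fst p - a) \<bullet> (snd p - b) \<partial>\<pi>) = (\<integral>p. (fst p - ?m) \<bullet> (snd p - ?n) \<partial>\<pi>) + (?m - a) \<bullet> (?n - b)"
    unfolding e using gen[of ?m ?n] j1 j2 by (simp add: inner_commute)
qed

lemma cpl_cost: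
  fixes \<mu> \<nu> :: "'a::{real_inner,complete_space} measure"
  assumes sep: "separable_space TYPE('a)" and W: "\<mu> \<in> W2" "\<nu> \<in> W2" and pi: "\<pi> \<in> couplings \<mu> \<nu>"
  shows "(\<integral>\<^sup>+p. ennreal ((norm (fst p - snd p))^2) \<partial>\<pi>) =
    ennreal ((norm (bary \<mu> - bary \<nu>))^2 + (\<integral>x. (norm (x - bary \<mu>))^2 \<partial>\<mu>) + (\<integral>y. (norm (y - bary \<nu>))^2 \<partial>\<nu>)
       - 2 * (\<integral>p. (fst p - bary \<mu>) \<bullet> (snd p - bary \<nu>) \<partial>\<pi>))"
    and "0 \<le> (norm (bary \<mu> - bary \<nu>))^2 + (\<integral>x. (norm (x - bary \<mu>))^2 \<partial>\<mu>) + (\<integral>y. (norm (y - bary \<nu>))^2 \<partial>\<nu>)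
       - 2 * (\<integral>p. (fst p - bary \<mu>) \<bullet> (snd p - bary \<nu>) \<partial>\<pi>)"
proof -
  interpret P: prob_space \<pi> using cplD(2)[OF pi] .
  let ?m = "bary \<mu>" and ?n = "bary \<nu>"
  define d where "d = ?m - ?n"
  define S1 where "S1 = (\<integral>x. (norm (x - ?m))^2 \<partial>\<mu>)"
  define S2 where "S2 = (\<integral>y. (norm (y - ?n))^2 \<partial>\<nu>)"
  define C where "C = (\<integral>p. (fst p - ?m) \<bullet> (snd p - ?n) \<partial>\<pi>)"
  have c1: "(\<lambda>x. (norm (x - ?m))^2) \<in> borel_measurable borel" by (intro cont_meas continuous_intros)
  have c2: "(\<lambda>x. (norm (x - ?n))^2) \<in> borel_measurable borel" by (intro cont_meas continuous_intros)
  have c3: "(\<lambda>x. (x - ?m) \<bullet> d) \<in> borel_measurable borel" by (intro cont_meas continuous_intros)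
  have c4: "(\<lambda>x. (x - ?n) \<bullet> d) \<in> borel_measurable borel" by (intro cont_meas continuous_intros)
  have h1: "has_bochner_integral \<pi> (\<lambda>p. (norm (fst p - ?m))^2) S1"
    unfolding has_bochner_integral_iff S1_def using cpl_int_fst[OF pi c1 w2_int_norm2[OF W(1)]] by simp
  have h2: "has_bochner_integral \<pi> (\<lambda>p. (norm (snd p - ?n))^2) S2"
    unfolding has_bochner_integral_iff S2_def using cpl_int_snd[OF pi c2 w2_int_norm2[OF W(2)]] by simp
  have h3: "has_bochner_integral \<pi> (\<lambda>p. (norm d)^2) ((norm d)^2)"
    unfolding has_bochner_integral_iff by (simp add: P.prob_space)
  have h4: "has_bochner_integral \<pi> (\<lambda>p. (fst p - ?m) \<bullet> (snd p - ?n)) C"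
    unfolding has_bochner_integral_iff C_def using cpl_inner(1)[OF sep W pi] by simp
  have h5: "has_bochner_integral \<pi> (\<lambda>p. (fst p - ?m) \<bullet> d) 0"
    unfolding has_bochner_integral_iff using cpl_int_fst[OF pi c3 bary_int(1)[OF W(1)]] bary_int(2)[OF W(1), of ?m d] by simp
  have h6: "has_bochner_integral \<pi> (\<lambda>p. (snd p - ?n) \<bullet> d) 0"
    unfolding has_bochner_integral_iff using cpl_int_snd[OF pi c4 bary_int(1)[OF W(2)]] bary_int(2)[OF W(2), of ?n d] by simp
  have H: "has_bochner_integral \<pi> (\<lambda>p. (norm (fst p - ?m))^2 + (norm (snd p - ?n))^2 + (norm d)^2
      - 2 * ((fst p - ?m) \<bullet> (snd p - ?n)) + 2 * ((fst p - ?m) \<bullet> d) - 2 * ((snd p - ?n) \<bullet> d))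
      (S1 + S2 + (norm d)^2 - 2 * C + 2 * 0 - 2 * 0)"
    by (intro has_bochner_integral_diff has_bochner_integral_add has_bochner_integral_mult_right h1 h2 h3 h4 h5 h6)
  have eq: "(norm (fst p - snd p))^2 = (norm (fst p - ?m))^2 + (norm (snd p - ?n))^2 + (norm d)^2
      - 2 * ((fst p - ?m) \<bullet> (snd p - ?n)) + 2 * ((fst p - ?m) \<bullet> d) - 2 * ((snd p - ?n) \<bullet> d)" for p
  proof -
    have "fst p - snd p = (fst p - ?m) - (snd p - ?n) + d" unfolding d_def by simp
    then show ?thesis using norm_expand[of "fst p - ?m" "snd p - ?n" d] by metis
  qed
  have H': "has_bochner_integral \<pi> (\<lambda>p. (norm (fst p - snd p))^2) (S1 + S2 + (norm d)^2 - 2 * C)"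
    using H unfolding eq[symmetric] by simp
  then have "(\<integral>\<^sup>+p. ennreal ((norm (fst p - snd p))^2) \<partial>\<pi>) = ennreal (S1 + S2 + (norm d)^2 - 2 * C)"
    unfolding has_bochner_integral_iff by (subst nn_integral_eq_integral) auto
  then show "(\<integral>\<^sup>+p. ennreal ((norm (fst p - snd p))^2) \<partial>\<pi>) =
    ennreal ((norm (bary \<mu> - bary \<nu>))^2 + (\<integral>x. (norm (x - bary \<mu>))^2 \<partial>\<mu>) + (\<integral>y. (norm (y - bary \<nu>))^2 \<partial>\<nu>)
       - 2 * (\<integral>p. (fst p - bary \<mu>) \<bullet> (snd p - bary \<nu>) \<partial>\<pi>))"
    unfolding S1_def S2_def C_def d_def by (simp add: algebra_simps)
  have "0 \<le> S1 + S2 + (norm d)^2 - 2 * C"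
  proof -
    have "0 \<le> (\<integral>p. (norm (fst p - snd p))^2 \<partial>\<pi>)" by (rule integral_nonneg_AE) simp
    then show ?thesis using H' unfolding has_bochner_integral_iff by simp
  qed
  then show "0 \<le> (norm (bary \<mu> - bary \<nu>))^2 + (\<integral>x. (norm (x - bary \<mu>))^2 \<partial>\<mu>) + (\<integral>y. (norm (y - bary \<nu>))^2 \<partial>\<nu>)
       - 2 * (\<integral>p. (fst p - bary \<mu>) \<bullet> (snd p - bary \<nu>) \<partial>\<pi>)"
    unfolding S1_def S2_def C_def d_def by (simp add: algebra_simps)
qed

lemma dens_cpl:
  fixes \<mu> \<nu> :: "'a::real_inner measure"
  assumes P: "prob_space \<mu>" "prob_space \<nu>" and S: "sets \<mu> = sets borel" "sets \<nu> = sets borel"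
    and AB: "A \<in> sets borel" "B \<in> sets borel" and th: "\<bar>\<theta>\<bar> \<le> 1"
  shows "density (\<mu> \<Otimes>\<^sub>M \<nu>) (\<lambda>p. ennreal (1 + \<theta> * (indicator A (fst p) - measure \<mu> A) * (indicator B (snd p) - measure \<nu> B)))
     \<in> couplings \<mu> \<nu>"
proof -
  interpret M1: prob_space \<mu> by (rule P(1))
  interpret M2: prob_space \<nu> by (rule P(2))
  interpret PP: pair_prob_space \<mu> \<nu> by unfold_locales
  define \<alpha> where "\<alpha> = measure \<mu> A"
  define \<beta> where "\<beta> = measure \<nu> B"
  define g where "g p = 1 + \<theta> * (indicator A (fst p) - \<alpha>) * (indicator B (snd p) - \<beta>)" for p :: "'a \<times> 'a"
  define \<pi> where "\<pi> = density (\<mu> \<Otimes>\<^sub>M \<nu>) (\<lambda>p. ennreal (g p))"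
  have [measurable]: "A \<in> sets \<mu>" "B \<in> sets \<nu>" using S AB by auto
  have spu: "space \<mu> = UNIV" "space \<nu> = UNIV"
    using sets_eq_imp_space_eq[OF S(1)] sets_eq_imp_space_eq[OF S(2)] by auto
  have gm[measurable]: "g \<in> borel_measurable (\<mu> \<Otimes>\<^sub>M \<nu>)" unfolding g_def by measurable
  have a01: "0 \<le> \<alpha>" "\<alpha> \<le> 1" "0 \<le> \<beta>" "\<beta> \<le> 1" unfolding \<alpha>_def \<beta>_def by auto
  have ind: "\<bar>indicator C x - c\<bar> \<le> 1" if "0 \<le> c" "c \<le> 1" for C x and c :: real
    using that by (auto simp: indicator_def)
  have g0: "0 \<le> g p" for p
  proof -
    have "\<bar>\<theta> * (indicator A (fst p) - \<alpha>) * (indicator B (snd p) - \<beta>)\<bar> \<le> 1 * 1 * 1"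
      unfolding abs_mult using th ind[OF a01(1,2)] ind[OF a01(3,4)]
      by (intro mult_mono) auto
    then show ?thesis unfolding g_def by linarith
  qed
  have inner1: "(\<integral>\<^sup>+y. ennreal (g (x, y)) \<partial>\<nu>) = 1" for x
  proof -
    define c where "c = \<theta> * (indicator A x - \<alpha>)"
    have e: "g (x, y) = (1 - c * \<beta>) + c * indicator B y" for y unfolding g_def c_def by (simp add: algebra_simps)
    have hb: "has_bochner_integral \<nu> (\<lambda>y. (1 - c * \<beta>) + c * indicator B y) ((1 - c * \<beta>) + c * \<beta>)"
      unfolding \<beta>_def by (intro has_bochner_integral_add has_bochner_integral_mult_right)
        (auto simp: has_bochner_integral_iff M2.prob_space less_top[symmetric] intro!: integrable_real_indicator M2.emeasure_finite[unfolded less_top[symmetric]])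
    have "(\<integral>\<^sup>+y. ennreal (g (x, y)) \<partial>\<nu>) = ennreal ((1 - c * \<beta>) + c * \<beta>)"
      unfolding e using hb g0[of "(x, _)"] unfolding e
      by (subst nn_integral_eq_integral) (auto simp: has_bochner_integral_iff)
    then show ?thesis by simp
  qed
  have inner2: "(\<integral>\<^sup>+x. ennreal (g (x, y)) \<partial>\<mu>) = 1" for y
  proof -
    define c where "c = \<theta> * (indicator B y - \<beta>)"
    have e: "g (x, y) = (1 - c * \<alpha>) + c * indicator A x" for x unfolding g_def c_def by (simp add: algebra_simps)
    have hb: "has_bochner_integral \<mu> (\<lambda>x. (1 - c * \<alpha>) + c * indicator A x) ((1 - c * \<alpha>) + c * \<alpha>)"
      unfolding \<alpha>_def by (intro has_bochner_integral_add has_bochner_integral_mult_right)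
        (auto simp: has_bochner_integral_iff M1.prob_space less_top[symmetric] intro!: integrable_real_indicator M1.emeasure_finite[unfolded less_top[symmetric]])
    have "(\<integral>\<^sup>+x. ennreal (g (x, y)) \<partial>\<mu>) = ennreal ((1 - c * \<alpha>) + c * \<alpha>)"
      unfolding e using hb g0[of "(_, y)"] unfolding e
      by (subst nn_integral_eq_integral) (auto simp: has_bochner_integral_iff)
    then show ?thesis by simp
  qed
  have sp: "sets \<pi> = sets (borel \<Otimes>\<^sub>M borel)" unfolding \<pi>_def using S by (simp cong: sets_pair_measure_cong)
  have spi: "space \<pi> = UNIV" unfolding \<pi>_def by (simp add: space_pair_measure spu)
  have fm: "fst \<in> measurable \<pi> borel" "snd \<in> measurable \<pi> borel"
    using measurable_cong_sets[OF sp refl, of borel] by auto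
  have m1: "distr \<pi> borel fst = \<mu>"
  proof (rule measure_eqI)
    show "sets (distr \<pi> borel fst) = sets \<mu>" using S by simp
    fix X assume "X \<in> sets (distr \<pi> borel fst)"
    then have XB: "X \<in> sets borel" by simp
    then have X[measurable]: "X \<in> sets \<mu>" using S by simp
    have XU[measurable]: "X \<times> UNIV \<in> sets (\<mu> \<Otimes>\<^sub>M \<nu>)" using pair_measureI[OF X sets.top[of \<nu>]] spu by simp
    have "emeasure (distr \<pi> borel fst) X = emeasure \<pi> (X \<times> UNIV)"
      using fm XB by (subst emeasure_distr) (auto simp: spi S vimage_fst)
    also have "\<dots> = (\<integral>\<^sup>+p. ennreal (g p) * indicator (X \<times> UNIV) p \<partial>(\<mu> \<Otimes>\<^sub>M \<nu>))"
      unfolding \<pi>_def by (rule emeasure_density) (use pair_measureI[OF X sets.top[of \<nu>]] spu in auto)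
    also have "\<dots> = (\<integral>\<^sup>+x. \<integral>\<^sup>+y. ennreal (g (x,y)) * indicator (X \<times> UNIV) (x,y) \<partial>\<nu> \<partial>\<mu>)"
      by (rule M2.nn_integral_fst[symmetric]) measurable
    also have "\<dots> = (\<integral>\<^sup>+x. (\<integral>\<^sup>+y. ennreal (g (x,y)) \<partial>\<nu>) * indicator X x \<partial>\<mu>)"
      by (intro nn_integral_cong nn_integral_multc) (auto simp: indicator_def)
    also have "\<dots> = (\<integral>\<^sup>+x. indicator X x \<partial>\<mu>)" by (simp add: inner1)
    also have "\<dots> = emeasure \<mu> X" by simp
    finally show "emeasure (distr \<pi> borel fst) X = emeasure \<mu> X" .
  qed
  have m2: "distr \<pi> borel snd = \<nu>"
  proof (rule measure_eqI)
    show "sets (distr \<pi> borel snd) = sets \<nu>" using S by simp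
    fix X assume "X \<in> sets (distr \<pi> borel snd)"
    then have XB: "X \<in> sets borel" by simp
    then have X[measurable]: "X \<in> sets \<nu>" using S by simp
    have XU[measurable]: "UNIV \<times> X \<in> sets (\<mu> \<Otimes>\<^sub>M \<nu>)" using pair_measureI[OF sets.top[of \<mu>] X] spu by simp
    have "emeasure (distr \<pi> borel snd) X = emeasure \<pi> (UNIV \<times> X)"
      using fm XB by (subst emeasure_distr) (auto simp: spi S vimage_snd)
    also have "\<dots> = (\<integral>\<^sup>+p. ennreal (g p) * indicator (UNIV \<times> X) p \<partial>(\<mu> \<Otimes>\<^sub>M \<nu>))"
      unfolding \<pi>_def by (rule emeasure_density) (use pair_measureI[OF sets.top[of \<mu>] X] spu in auto)
    also have "\<dots> = (\<integral>\<^sup>+y. \<integral>\<^sup>+x. ennreal (g (x,y)) * indicator (UNIV \<times> X) (x,y) \<partial>\<mu> \<partial>\<nu>)"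
      by (rule PP.nn_integral_snd[symmetric]) measurable
    also have "\<dots> = (\<integral>\<^sup>+y. (\<integral>\<^sup>+x. ennreal (g (x,y)) \<partial>\<mu>) * indicator X y \<partial>\<nu>)"
      by (intro nn_integral_cong nn_integral_multc) (auto simp: indicator_def)
    also have "\<dots> = (\<integral>\<^sup>+y. indicator X y \<partial>\<nu>)" by (simp add: inner2)
    also have "\<dots> = emeasure \<nu> X" by simp
    finally show "emeasure (distr \<pi> borel snd) X = emeasure \<nu> X" .
  qed
  have "prob_space \<pi>"
  proof
    have "emeasure \<pi> (space \<pi>) = emeasure (distr \<pi> borel fst) UNIV"
      using fm by (subst emeasure_distr) (auto simp: spi)
    also have "\<dots> = 1" using m1 M1.emeasure_space_1 spu by simp
    finally show "emeasure \<pi> (space \<pi>) = 1" .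
  qed
  then show ?thesis using sp m1 m2 unfolding couplings_def \<pi>_def g_def \<alpha>_def \<beta>_def by auto
qed

lemma prod_cpl:
  fixes \<mu> \<nu> :: "'a::real_inner measure"
  assumes "prob_space \<mu>" "prob_space \<nu>" "sets \<mu> = sets borel" "sets \<nu> = sets borel"
  shows "\<mu> \<Otimes>\<^sub>M \<nu> \<in> couplings \<mu> \<nu>"
  using dens_cpl[OF assms, of UNIV UNIV 0] by (simp add: density_1)

lemma wdist_dirac:
  fixes \<mu> :: "'a::{real_inner,complete_space} measure"
  assumes W: "\<mu> \<in> W2"
  shows "wdist \<mu> (return borel m) = sqrt (\<integral>x. (norm (x - m))^2 \<partial>\<mu>)"
proof -
  let ?d = "return borel m"
  have pd: "prob_space ?d" by (rule prob_space_return) simp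
  have sd: "sets ?d = sets borel" by simp
  have ne: "couplings \<mu> ?d \<noteq> {}" using prod_cpl[OF W2D(2)[OF W] pd W2D(1)[OF W] sd] by auto
  have cm: "(\<lambda>x. ennreal ((norm (x - m))^2)) \<in> borel_measurable borel"
    by (intro measurable_compose[OF cont_meas[of "\<lambda>x. (norm (x - m))^2"] measurable_ennreal] continuous_intros)
  have c: "(\<integral>\<^sup>+p. ennreal ((norm (fst p - snd p))^2) \<partial>\<pi>) = (\<integral>\<^sup>+x. ennreal ((norm (x - m))^2) \<partial>\<mu>)"
    if pi: "\<pi> \<in> couplings \<mu> ?d" for \<pi>
  proof -
    have "AE y in ?d. y = m" by (subst AE_return) auto
    then have "AE p in \<pi>. snd p = m" by (rule cpl_AE_snd[OF pi]) (simp add: borel_closed)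
    then have "(\<integral>\<^sup>+p. ennreal ((norm (fst p - snd p))^2) \<partial>\<pi>) = (\<integral>\<^sup>+p. ennreal ((norm (fst p - m))^2) \<partial>\<pi>)"
      by (intro nn_integral_cong_AE) auto
    also have "\<dots> = (\<integral>\<^sup>+x. ennreal ((norm (x - m))^2) \<partial>\<mu>)"
      by (rule cpl_nn_fst[OF pi cm])
    finally show ?thesis .
  qed
  have "(INF \<pi>\<in>couplings \<mu> ?d. \<integral>\<^sup>+ p. ennreal ((norm (fst p - snd p))^2) \<partial>\<pi>) = (\<integral>\<^sup>+x. ennreal ((norm (x - m))^2) \<partial>\<mu>)"
    using ne c by simp
  also have "\<dots> = ennreal (\<integral>x. (norm (x - m))^2 \<partial>\<mu>)"
    using w2_int_norm2[OF W] by (subst nn_integral_eq_integral) auto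
  finally show ?thesis unfolding wdist_def by simp
qed

lemma ind_lin:
  fixes \<mu> :: "'a::{real_inner,complete_space} measure"
  assumes W: "\<mu> \<in> W2" and A: "A \<in> sets borel" and wA: "\<forall>z. wA \<bullet> z = (\<integral>x. indicator A x * (x \<bullet> z) \<partial>\<mu>)"
  shows "has_bochner_integral \<mu> (\<lambda>x. (indicator A x - measure \<mu> A) * ((x - bary \<mu>) \<bullet> z))
           ((wA - measure \<mu> A *\<^sub>R bary \<mu>) \<bullet> z)"
proof -
  interpret prob_space \<mu> using W2D[OF W] by simp
  let ?m = "bary \<mu>" and ?a = "measure \<mu> A"
  have A': "A \<in> sets \<mu>" using A W2D(1)[OF W] by simp
  have hm: "indicator A \<in> borel_measurable (borel :: 'a measure)" using A by simp
  have t1: "has_bochner_integral \<mu> (\<lambda>x. indicator A x * (x \<bullet> z)) (wA \<bullet> z)"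
    unfolding has_bochner_integral_iff using w2_int_lin[OF W hm, of z] wA by (auto simp: indicator_def)
  have t2: "has_bochner_integral \<mu> (\<lambda>x. (?m \<bullet> z) * indicator A x) ((?m \<bullet> z) * ?a)"
    by (intro has_bochner_integral_mult_right)
       (auto simp: has_bochner_integral_iff A' less_top[symmetric] intro!: integrable_real_indicator)
  have t3: "has_bochner_integral \<mu> (\<lambda>x. ?a * (x \<bullet> z)) (?a * (?m \<bullet> z))"
    using w2_int_lin[OF W, of "\<lambda>_. 1" z] bary_eq[OF W, of z]
    by (intro has_bochner_integral_mult_right) (auto simp: has_bochner_integral_iff)
  have t4: "has_bochner_integral \<mu> (\<lambda>x. ?a * (?m \<bullet> z)) (?a * (?m \<bullet> z))"
    by (auto simp: has_bochner_integral_iff prob_space)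
  have H: "has_bochner_integral \<mu> (\<lambda>x. indicator A x * (x \<bullet> z) - (?m \<bullet> z) * indicator A x - ?a * (x \<bullet> z) + ?a * (?m \<bullet> z))
     (wA \<bullet> z - (?m \<bullet> z) * ?a - ?a * (?m \<bullet> z) + ?a * (?m \<bullet> z))"
    by (intro has_bochner_integral_add has_bochner_integral_diff t1 t2 t3 t4)
  have e: "(indicator A x - ?a) * ((x - ?m) \<bullet> z) = indicator A x * (x \<bullet> z) - (?m \<bullet> z) * indicator A x - ?a * (x \<bullet> z) + ?a * (?m \<bullet> z)" for x
    by (simp add: inner_diff_left algebra_simps)
  have v: "wA \<bullet> z - (?m \<bullet> z) * ?a - ?a * (?m \<bullet> z) + ?a * (?m \<bullet> z) = (wA - ?a *\<^sub>R ?m) \<bullet> z"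
    by (simp add: inner_diff_left algebra_simps)
  show ?thesis using H unfolding e[symmetric] v .
qed

lemma dens_cov:
  fixes \<mu> \<nu> :: "'a::{real_inner,complete_space} measure"
  assumes sep: "separable_space TYPE('a)" and W: "\<mu> \<in> W2" "\<nu> \<in> W2"
    and AB: "A \<in> sets borel" "B \<in> sets borel" and th: "\<bar>\<theta>\<bar> \<le> 1"
    and wA: "\<forall>z. wA \<bullet> z = (\<integral>x. indicator A x * (x \<bullet> z) \<partial>\<mu>)"
    and wB: "\<forall>z. wB \<bullet> z = (\<integral>x. indicator B x * (x \<bullet> z) \<partial>\<nu>)"
  shows "(\<integral>p. (fst p - bary \<mu>) \<bullet> (snd p - bary \<nu>) \<partial>(density (\<mu> \<Otimes>\<^sub>M \<nu>)
      (\<lambda>p. ennreal (1 + \<theta> * (indicator A (fst p) - measure \<mu> A) * (indicator B (snd p) - measure \<nu> B)))))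
    = \<theta> * ((wA - measure \<mu> A *\<^sub>R bary \<mu>) \<bullet> (wB - measure \<nu> B *\<^sub>R bary \<nu>))"
proof -
  interpret M1: prob_space \<mu> using W2D[OF W(1)] by simp
  interpret M2: prob_space \<nu> using W2D[OF W(2)] by simp
  interpret PP: pair_prob_space \<mu> \<nu> by unfold_locales
  let ?m = "bary \<mu>" and ?n = "bary \<nu>"
  define \<alpha> where "\<alpha> = measure \<mu> A"
  define \<beta> where "\<beta> = measure \<nu> B"
  define g where "g p = 1 + \<theta> * (indicator A (fst p) - \<alpha>) * (indicator B (snd p) - \<beta>)" for p :: "'a \<times> 'a"
  define f where "f p = (fst p - ?m) \<bullet> (snd p - ?n)" for p :: "'a \<times> 'a"
  have S: "sets \<mu> = sets borel" "sets \<nu> = sets borel" using W2D W by auto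
  have [measurable]: "A \<in> sets \<mu>" "B \<in> sets \<nu>" using S AB by auto
  have pc: "\<mu> \<Otimes>\<^sub>M \<nu> \<in> couplings \<mu> \<nu>" using prod_cpl[OF W2D(2)[OF W(1)] W2D(2)[OF W(2)] S] .
  have gm[measurable]: "g \<in> borel_measurable (\<mu> \<Otimes>\<^sub>M \<nu>)" unfolding g_def by measurable
  have fm: "f \<in> borel_measurable (\<mu> \<Otimes>\<^sub>M \<nu>)" unfolding f_def
  proof (rule inner_meas[OF sep])
    have "(\<lambda>x. x - ?m) \<in> borel_measurable borel" by (intro cont_meas continuous_intros)
    then show "(\<lambda>p. fst p - ?m) \<in> borel_measurable (\<mu> \<Otimes>\<^sub>M \<nu>)" by (rule cpl_fst_f[OF pc])
    have "(\<lambda>x. x - ?n) \<in> borel_measurable borel" by (intro cont_meas continuous_intros)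
    then show "(\<lambda>p. snd p - ?n) \<in> borel_measurable (\<mu> \<Otimes>\<^sub>M \<nu>)" by (rule cpl_snd_f[OF pc])
  qed
  have a01: "0 \<le> \<alpha>" "\<alpha> \<le> 1" "0 \<le> \<beta>" "\<beta> \<le> 1" unfolding \<alpha>_def \<beta>_def by auto
  have ind: "\<bar>indicator C x - c\<bar> \<le> 1" if "0 \<le> c" "c \<le> 1" for C x and c :: real
    using that by (auto simp: indicator_def)
  have gb: "0 \<le> g p \<and> g p \<le> 2" for p
  proof -
    have "\<bar>\<theta> * (indicator A (fst p) - \<alpha>) * (indicator B (snd p) - \<beta>)\<bar> \<le> 1 * 1 * 1"
      unfolding abs_mult using th ind[OF a01(1,2)] ind[OF a01(3,4)]
      by (intro mult_mono) auto
    then show ?thesis unfolding g_def by linarith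
  qed
  have fi: "integrable (\<mu> \<Otimes>\<^sub>M \<nu>) f" unfolding f_def by (rule cpl_inner(1)[OF sep W pc])
  have gfi: "integrable (\<mu> \<Otimes>\<^sub>M \<nu>) (\<lambda>p. g p * f p)"
  proof (rule Bochner_Integration.integrable_bound)
    show "integrable (\<mu> \<Otimes>\<^sub>M \<nu>) (\<lambda>p. 2 * f p)" using fi by simp
    show "(\<lambda>p. g p * f p) \<in> borel_measurable (\<mu> \<Otimes>\<^sub>M \<nu>)" using gm fm by simp
    show "AE p in \<mu> \<Otimes>\<^sub>M \<nu>. norm (g p * f p) \<le> norm (2 * f p)"
    proof (rule AE_I2)
      fix p
      have "\<bar>g p\<bar> * \<bar>f p\<bar> \<le> 2 * \<bar>f p\<bar>" using gb[of p] by (intro mult_right_mono) auto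
      then show "norm (g p * f p) \<le> norm (2 * f p)" by (simp add: abs_mult)
    qed
  qed
  have "(\<integral>p. f p \<partial>(density (\<mu> \<Otimes>\<^sub>M \<nu>) (\<lambda>p. ennreal (g p)))) = (\<integral>p. g p *\<^sub>R f p \<partial>(\<mu> \<Otimes>\<^sub>M \<nu>))"
    by (rule integral_density[OF fm gm]) (use gb in auto)
  also have "\<dots> = (\<integral>x. (\<integral>y. g (x,y) * f (x,y) \<partial>\<nu>) \<partial>\<mu>)"
    using PP.integral_fst'[OF gfi] by simp
  also have "\<dots> = (\<integral>x. \<theta> * ((indicator A x - \<alpha>) * ((x - ?m) \<bullet> (wB - \<beta> *\<^sub>R ?n))) \<partial>\<mu>)"
  proof (rule Bochner_Integration.integral_cong[OF refl])
    fix x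
    define c where "c = \<theta> * (indicator A x - \<alpha>)"
    have e: "g (x,y) * f (x,y) = (y - ?n) \<bullet> (x - ?m) + c * ((indicator B y - \<beta>) * ((y - ?n) \<bullet> (x - ?m)))" for y
      unfolding g_def f_def c_def by (simp add: algebra_simps inner_commute)
    have h1: "has_bochner_integral \<nu> (\<lambda>y. (y - ?n) \<bullet> (x - ?m)) 0"
      using bary_int[OF W(2), of ?n "x - ?m"] by (simp add: has_bochner_integral_iff)
    have h2: "has_bochner_integral \<nu> (\<lambda>y. (indicator B y - \<beta>) * ((y - ?n) \<bullet> (x - ?m))) ((wB - \<beta> *\<^sub>R ?n) \<bullet> (x - ?m))"
      unfolding \<beta>_def by (rule ind_lin[OF W(2) AB(2) wB])
    have "has_bochner_integral \<nu> (\<lambda>y. g (x,y) * f (x,y)) (0 + c * ((wB - \<beta> *\<^sub>R ?n) \<bullet> (x - ?m)))"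
      unfolding e by (intro has_bochner_integral_add has_bochner_integral_mult_right h1 h2)
    then show "(\<integral>y. g (x,y) * f (x,y) \<partial>\<nu>) = \<theta> * ((indicator A x - \<alpha>) * ((x - ?m) \<bullet> (wB - \<beta> *\<^sub>R ?n)))"
      unfolding c_def by (simp add: has_bochner_integral_iff inner_commute)
  qed
  also have "\<dots> = \<theta> * ((wA - \<alpha> *\<^sub>R ?m) \<bullet> (wB - \<beta> *\<^sub>R ?n))"
    using ind_lin[OF W(1) AB(1) wA, of "wB - \<beta> *\<^sub>R ?n"] unfolding \<alpha>_def
    by (simp add: has_bochner_integral_iff)
  finally show ?thesis unfolding f_def g_def \<alpha>_def \<beta>_def .
qed

lemma supp_closed: "closed (supp (\<mu> :: 'a::topological_space measure))"
proof -
  have "open (- supp \<mu>)"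
  unfolding open_subopen[of "- supp \<mu>"]
  proof
    fix x assume "x \<in> - supp \<mu>"
    then obtain U where U: "open U" "x \<in> U" "\<not> emeasure \<mu> U > 0" unfolding supp_def by auto
    have "U \<subseteq> - supp \<mu>" using U unfolding supp_def by auto
    then show "\<exists>T. open T \<and> x \<in> T \<and> T \<subseteq> - supp \<mu>" using U by blast
  qed
  then show ?thesis by (simp add: closed_def)
qed

lemma supp_AE:
  fixes \<mu> :: "'a::metric_space measure"
  assumes sep: "separable_space TYPE('a)" and S: "sets \<mu> = sets borel"
  shows "AE x in \<mu>. x \<in> supp \<mu>"
proof -
  obtain D :: "'a set" where D: "countable D" "\<And>x e. e > 0 \<Longrightarrow> \<exists>d\<in>D. dist d x < e"
    using sep_dense[OF sep] by blast
  define X where "X = {(d,q). d \<in> D \<and> q \<in> \<rat> \<and> emeasure \<mu> (ball d q) = 0}"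
  have cX: "countable X"
    by (rule countable_subset[of _ "D \<times> \<rat>"]) (auto simp: X_def D countable_rat)
  have N: "(\<Union>(d,q)\<in>X. ball d q) \<in> null_sets \<mu>"
    using cX by (intro null_sets_UN') (auto simp: X_def S null_sets_def)
  show ?thesis
  proof (rule AE_I'[OF N])
    show "{x \<in> space \<mu>. x \<notin> supp \<mu>} \<subseteq> (\<Union>(d,q)\<in>X. ball d q)"
    proof
      fix x assume "x \<in> {x \<in> space \<mu>. x \<notin> supp \<mu>}"
      then obtain U where U: "open U" "x \<in> U" "\<not> emeasure \<mu> U > 0" unfolding supp_def by auto
      obtain r where r: "r > 0" "ball x r \<subseteq> U" using U open_contains_ball by blast
      obtain d where d: "d \<in> D" "dist d x < r / 3" using D(2)[of "r/3" x] r by auto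
      obtain q where q: "q \<in> \<rat>" "r / 3 < q" "q < 2 * r / 3" using Rats_dense_in_real[of "r/3" "2*r/3"] r by auto
      have sub: "ball d q \<subseteq> U"
      proof
        fix y assume "y \<in> ball d q"
        then have "dist d y < q" by (simp add: mem_ball)
        moreover have "dist x y \<le> dist d x + dist d y" by (rule dist_triangle3)
        ultimately have "y \<in> ball x r" using d q by (simp add: mem_ball)
        then show "y \<in> U" using r by auto
      qed
      have "emeasure \<mu> (ball d q) \<le> emeasure \<mu> U" using U S sub by (intro emeasure_mono) auto
      then have "emeasure \<mu> (ball d q) = 0" using U by auto
      then have "(d,q) \<in> X" using d q unfolding X_def by auto
      moreover have "x \<in> ball d q" using d q by (simp add: mem_ball)
      ultimately show "x \<in> (\<Union>(d,q)\<in>X. ball d q)" by blast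
    qed
  qed
qed

lemma ball_vec:
  fixes \<mu> :: "'a::{real_inner,complete_space} measure"
  assumes W: "\<mu> \<in> W2" and r: "0 \<le> r"
    and wA: "\<forall>z. wA \<bullet> z = (\<integral>x. indicator (ball x0 r) x * (x \<bullet> z) \<partial>\<mu>)"
  shows "norm (wA - measure \<mu> (ball x0 r) *\<^sub>R x0) \<le> measure \<mu> (ball x0 r) * r"
proof -
  interpret prob_space \<mu> using W2D[OF W] by simp
  define A where "A = ball x0 r"
  define \<alpha> where "\<alpha> = measure \<mu> A"
  have A': "A \<in> sets \<mu>" using W2D(1)[OF W] unfolding A_def by simp
  have hm: "indicator A \<in> borel_measurable (borel :: 'a measure)" unfolding A_def by (intro borel_measurable_indicator borel_open) simp
  have key: "\<bar>(wA - \<alpha> *\<^sub>R x0) \<bullet> z\<bar> \<le> \<alpha> * r * norm z" for z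
  proof -
    have t1: "has_bochner_integral \<mu> (\<lambda>x. indicator A x * (x \<bullet> z)) (wA \<bullet> z)"
      unfolding has_bochner_integral_iff using w2_int_lin[OF W hm, of z] wA unfolding A_def
      by (auto simp: indicator_def)
    have t2: "has_bochner_integral \<mu> (\<lambda>x. (x0 \<bullet> z) * indicator A x) ((x0 \<bullet> z) * \<alpha>)"
      unfolding \<alpha>_def by (intro has_bochner_integral_mult_right)
         (auto simp: has_bochner_integral_iff A' less_top[symmetric] intro!: integrable_real_indicator)
    have t3: "has_bochner_integral \<mu> (\<lambda>x. (r * norm z) * indicator A x) ((r * norm z) * \<alpha>)"
      unfolding \<alpha>_def by (intro has_bochner_integral_mult_right)
         (auto simp: has_bochner_integral_iff A' less_top[symmetric] intro!: integrable_real_indicator)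
    have H: "has_bochner_integral \<mu> (\<lambda>x. indicator A x * (x \<bullet> z) - (x0 \<bullet> z) * indicator A x) (wA \<bullet> z - (x0 \<bullet> z) * \<alpha>)"
      by (intro has_bochner_integral_diff t1 t2)
    have "\<bar>wA \<bullet> z - (x0 \<bullet> z) * \<alpha>\<bar> = \<bar>\<integral>x. indicator A x * (x \<bullet> z) - (x0 \<bullet> z) * indicator A x \<partial>\<mu>\<bar>"
      using H by (simp add: has_bochner_integral_iff)
    also have "\<dots> \<le> (\<integral>x. \<bar>indicator A x * (x \<bullet> z) - (x0 \<bullet> z) * indicator A x\<bar> \<partial>\<mu>)"
      by (rule integral_abs_bound)
    also have "\<dots> \<le> (\<integral>x. (r * norm z) * indicator A x \<partial>\<mu>)"
    proof (rule integral_mono)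
      show "integrable \<mu> (\<lambda>x. \<bar>indicator A x * (x \<bullet> z) - (x0 \<bullet> z) * indicator A x\<bar>)"
        using H by (simp add: has_bochner_integral_iff)
      show "integrable \<mu> (\<lambda>x. (r * norm z) * indicator A x)" using t3 by (simp add: has_bochner_integral_iff)
      fix x
      show "\<bar>indicator A x * (x \<bullet> z) - (x0 \<bullet> z) * indicator A x\<bar> \<le> (r * norm z) * indicator A x"
      proof (cases "x \<in> A")
        case True
        then have "norm (x - x0) \<le> r" unfolding A_def by (simp add: mem_ball dist_norm norm_minus_commute)
        moreover have "\<bar>(x - x0) \<bullet> z\<bar> \<le> norm (x - x0) * norm z" by (rule Cauchy_Schwarz_ineq2)
        ultimately have "\<bar>(x - x0) \<bullet> z\<bar> \<le> r * norm z" by (meson mult_right_mono norm_ge_zero order_trans)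
        then show ?thesis using True by (simp add: inner_diff_left)
      qed simp
    qed
    also have "\<dots> = \<alpha> * r * norm z" using t3 by (simp add: has_bochner_integral_iff)
    finally show ?thesis by (simp add: inner_diff_left mult.commute)
  qed
  define z where "z = wA - \<alpha> *\<^sub>R x0"
  have "(norm z)^2 \<le> \<alpha> * r * norm z" using key[of z] unfolding z_def by (simp add: power2_norm_eq_inner)
  then have "norm z \<le> \<alpha> * r"
    by (cases "norm z = 0") (use r measure_nonneg[of \<mu> A] in \<open>auto simp: power2_eq_square \<alpha>_def\<close>)
  then show ?thesis unfolding z_def \<alpha>_def A_def .
qed

lemma pos_cov:
  fixes \<mu> \<nu> :: "'a::{real_inner,complete_space} measure"
  assumes sep: "separable_space TYPE('a)" and W: "\<mu> \<in> W2" "\<nu> \<in> W2"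
    and x0: "x0 \<in> supp \<mu>" and y0: "y0 \<in> supp \<nu>"
    and c: "(x0 - bary \<mu>) \<bullet> (y0 - bary \<nu>) \<noteq> 0"
  shows "\<exists>\<pi>\<in>couplings \<mu> \<nu>. (\<integral>p. (fst p - bary \<mu>) \<bullet> (snd p - bary \<nu>) \<partial>\<pi>) > 0"
proof -
  interpret M1: prob_space \<mu> using W2D[OF W(1)] by simp
  interpret M2: prob_space \<nu> using W2D[OF W(2)] by simp
  let ?m = "bary \<mu>" and ?n = "bary \<nu>"
  define u where "u = x0 - ?m"
  define v where "v = y0 - ?n"
  define c where "c = u \<bullet> v"
  have c0: "c \<noteq> 0" using assms(6) unfolding c_def u_def v_def .
  define K0 where "K0 = norm u + norm v + 1"
  have K0: "K0 > 0" unfolding K0_def by (simp add: add_nonneg_pos)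
  define r where "r = min 1 (\<bar>c\<bar> / (2 * K0))"
  have r0: "r > 0" "r \<le> 1" unfolding r_def using c0 K0 by auto
  have rK: "r * K0 \<le> \<bar>c\<bar> / 2"
  proof -
    have "r \<le> \<bar>c\<bar> / (2 * K0)" unfolding r_def by simp
    then have "r * K0 \<le> \<bar>c\<bar> / (2 * K0) * K0" using K0 by (intro mult_right_mono) auto
    also have "\<dots> = \<bar>c\<bar> / 2" using K0 by (simp add: field_simps)
    finally show ?thesis .
  qed
  define A where "A = ball x0 r"
  define B where "B = ball y0 r"
  have AB: "A \<in> sets borel" "B \<in> sets borel" unfolding A_def B_def by simp_all
  define \<alpha> where "\<alpha> = measure \<mu> A"
  define \<beta> where "\<beta> = measure \<nu> B"
  have "emeasure \<mu> A > 0" using x0 r0 unfolding supp_def A_def by auto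
  then have a0: "\<alpha> > 0" unfolding \<alpha>_def using M1.emeasure_eq_measure[of A] by simp
  have "emeasure \<nu> B > 0" using y0 r0 unfolding supp_def B_def by auto
  then have b0: "\<beta> > 0" unfolding \<beta>_def using M2.emeasure_eq_measure[of B] by simp
  have hA: "indicator A \<in> borel_measurable (borel :: 'a measure)" using AB by simp
  have hB: "indicator B \<in> borel_measurable (borel :: 'a measure)" using AB by simp
  obtain wA where wA: "\<forall>z. wA \<bullet> z = (\<integral>x. indicator A x * (x \<bullet> z) \<partial>\<mu>)"
    using w2_vec[OF W(1) hA] by (auto simp: indicator_def)
  obtain wB where wB: "\<forall>z. wB \<bullet> z = (\<integral>x. indicator B x * (x \<bullet> z) \<partial>\<nu>)"
    using w2_vec[OF W(2) hB] by (auto simp: indicator_def)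
  define E1 where "E1 = wA - \<alpha> *\<^sub>R x0"
  define E2 where "E2 = wB - \<beta> *\<^sub>R y0"
  have nE1: "norm E1 \<le> \<alpha> * r" unfolding E1_def \<alpha>_def A_def
    using ball_vec[OF W(1) _ wA[unfolded A_def]] r0 by simp
  have nE2: "norm E2 \<le> \<beta> * r" unfolding E2_def \<beta>_def B_def
    using ball_vec[OF W(2) _ wB[unfolded B_def]] r0 by simp
  have eA: "wA - \<alpha> *\<^sub>R ?m = \<alpha> *\<^sub>R u + E1" unfolding E1_def u_def by (simp add: algebra_simps)
  have eB: "wB - \<beta> *\<^sub>R ?n = \<beta> *\<^sub>R v + E2" unfolding E2_def v_def by (simp add: algebra_simps)
  define R where "R = \<alpha> * (u \<bullet> E2) + \<beta> * (E1 \<bullet> v) + E1 \<bullet> E2"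
  have P: "(wA - \<alpha> *\<^sub>R ?m) \<bullet> (wB - \<beta> *\<^sub>R ?n) = \<alpha> * \<beta> * c + R"
  proof -
    have "(\<alpha> *\<^sub>R u + E1) \<bullet> (\<beta> *\<^sub>R v + E2) = \<alpha> * \<beta> * (u \<bullet> v) + \<alpha> * (u \<bullet> E2) + \<beta> * (E1 \<bullet> v) + E1 \<bullet> E2"
      by (simp add: inner_add_left inner_add_right distrib_left mult.assoc mult.left_commute)
    then show ?thesis unfolding eA eB R_def c_def by simp
  qed
  have R1: "\<bar>\<alpha> * (u \<bullet> E2)\<bar> \<le> \<alpha> * \<beta> * r * norm u"
  proof -
    have "\<bar>u \<bullet> E2\<bar> \<le> norm u * norm E2" by (rule Cauchy_Schwarz_ineq2)
    also have "\<dots> \<le> norm u * (\<beta> * r)" using nE2 by (intro mult_left_mono) auto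
    finally have "\<alpha> * \<bar>u \<bullet> E2\<bar> \<le> \<alpha> * (norm u * (\<beta> * r))" using a0 by (intro mult_left_mono) auto
    then show ?thesis using a0 by (simp add: abs_mult algebra_simps)
  qed
  have R2: "\<bar>\<beta> * (E1 \<bullet> v)\<bar> \<le> \<alpha> * \<beta> * r * norm v"
  proof -
    have "\<bar>E1 \<bullet> v\<bar> \<le> norm E1 * norm v" by (rule Cauchy_Schwarz_ineq2)
    also have "\<dots> \<le> (\<alpha> * r) * norm v" using nE1 by (intro mult_right_mono) auto
    finally have "\<beta> * \<bar>E1 \<bullet> v\<bar> \<le> \<beta> * ((\<alpha> * r) * norm v)" using b0 by (intro mult_left_mono) auto
    then show ?thesis using b0 by (simp add: abs_mult algebra_simps)
  qed
  have R3: "\<bar>E1 \<bullet> E2\<bar> \<le> \<alpha> * \<beta> * r"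
  proof -
    have "\<bar>E1 \<bullet> E2\<bar> \<le> norm E1 * norm E2" by (rule Cauchy_Schwarz_ineq2)
    also have "\<dots> \<le> (\<alpha> * r) * (\<beta> * r)" using nE1 nE2 a0 r0 by (intro mult_mono) auto
    also have "\<dots> = (\<alpha> * \<beta> * r) * r" by (simp add: algebra_simps)
    also have "\<dots> \<le> (\<alpha> * \<beta> * r) * 1" using r0 a0 b0 by (intro mult_left_mono) auto
    finally show ?thesis by simp
  qed
  have "\<bar>R\<bar> \<le> \<alpha> * \<beta> * r * norm u + \<alpha> * \<beta> * r * norm v + \<alpha> * \<beta> * r"
    unfolding R_def using R1 R2 R3 by linarith
  also have "\<dots> = \<alpha> * \<beta> * (r * K0)" unfolding K0_def by (simp add: algebra_simps)
  also have "\<dots> \<le> \<alpha> * \<beta> * (\<bar>c\<bar> / 2)" using rK a0 b0 by (intro mult_left_mono) auto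
  finally have Rb: "\<bar>R\<bar> \<le> \<alpha> * \<beta> * (\<bar>c\<bar> / 2)" .
  define \<theta> :: real where "\<theta> = (if c > 0 then 1 else -1)"
  have th: "\<bar>\<theta>\<bar> \<le> 1" unfolding \<theta>_def by simp
  have tc: "\<theta> * c = \<bar>c\<bar>" "\<bar>\<theta>\<bar> = 1" unfolding \<theta>_def by auto
  have "\<theta> * (\<alpha> * \<beta> * c + R) = \<alpha> * \<beta> * \<bar>c\<bar> + \<theta> * R"
    using tc by (simp add: algebra_simps)
  also have "\<dots> \<ge> \<alpha> * \<beta> * \<bar>c\<bar> - \<alpha> * \<beta> * (\<bar>c\<bar> / 2)"
  proof -
    have "\<bar>\<theta> * R\<bar> \<le> \<alpha> * \<beta> * (\<bar>c\<bar> / 2)" using Rb tc by (simp add: abs_mult)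
    then show ?thesis by linarith
  qed
  finally have ge: "\<theta> * (\<alpha> * \<beta> * c + R) \<ge> \<alpha> * \<beta> * \<bar>c\<bar> - \<alpha> * \<beta> * (\<bar>c\<bar> / 2)" .
  have "\<alpha> * \<beta> * \<bar>c\<bar> > 0" using a0 b0 c0 by simp
  then have pos: "\<theta> * (\<alpha> * \<beta> * c + R) > 0" using ge by linarith
  define \<pi> where "\<pi> = density (\<mu> \<Otimes>\<^sub>M \<nu>)
      (\<lambda>p. ennreal (1 + \<theta> * (indicator A (fst p) - measure \<mu> A) * (indicator B (snd p) - measure \<nu> B)))"
  have "\<pi> \<in> couplings \<mu> \<nu>" unfolding \<pi>_def
    by (rule dens_cpl[OF W2D(2)[OF W(1)] W2D(2)[OF W(2)] W2D(1)[OF W(1)] W2D(1)[OF W(2)] AB th])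
  moreover have "(\<integral>p. (fst p - ?m) \<bullet> (snd p - ?n) \<partial>\<pi>) = \<theta> * (\<alpha> * \<beta> * c + R)"
    unfolding \<pi>_def dens_cov[OF sep W AB th wA wB] using P unfolding \<alpha>_def \<beta>_def by simp
  ultimately show ?thesis using pos by (intro bexI[of _ \<pi>]) auto
qed

lemma orth_imp_zero:
  fixes \<mu> \<nu> :: "'a::{real_inner,complete_space} measure"
  assumes sep: "separable_space TYPE('a)" and W: "\<mu> \<in> W2" "\<nu> \<in> W2"
    and orth: "\<forall>u\<in>L0. \<forall>v\<in>M0. u \<bullet> v = 0"
    and sL: "supp \<mu> \<subseteq> (\<lambda>x. a + x) ` L0" and sM: "supp \<nu> \<subseteq> (\<lambda>x. b + x) ` M0"
    and pi: "\<pi> \<in> couplings \<mu> \<nu>"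
  shows "(\<integral>p. (fst p - bary \<mu>) \<bullet> (snd p - bary \<nu>) \<partial>\<pi>) = 0"
proof -
  let ?m = "bary \<mu>" and ?n = "bary \<nu>"
  have ort: "(x - a) \<bullet> (y - b) = 0" if xs: "x \<in> supp \<mu>" and ys: "y \<in> supp \<nu>" for x y
  proof -
    obtain l where "l \<in> L0" "x = a + l" using sL xs by auto
    moreover obtain k where "k \<in> M0" "y = b + k" using sM ys by auto
    ultimately show ?thesis using orth by simp
  qed
  have AEm: "AE x in \<mu>. x \<in> supp \<mu>" by (rule supp_AE[OF sep W2D(1)[OF W(1)]])
  have AEn: "AE y in \<nu>. y \<in> supp \<nu>" by (rule supp_AE[OF sep W2D(1)[OF W(2)]])
  have bs: "{x. x \<in> supp \<rho>} \<in> sets borel" for \<rho> :: "'a measure"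
    using supp_closed[of \<rho>] by (simp add: borel_closed)
  have "AE p in \<pi>. fst p \<in> supp \<mu>" by (rule cpl_AE_fst[OF pi AEm bs])
  moreover have "AE p in \<pi>. snd p \<in> supp \<nu>" by (rule cpl_AE_snd[OF pi AEn bs])
  ultimately have "AE p in \<pi>. (fst p - a) \<bullet> (snd p - b) = 0" using ort by auto
  then have z1: "(\<integral>p. (fst p - a) \<bullet> (snd p - b) \<partial>\<pi>) = 0" by (rule integral_eq_zero_AE)
  have z2: "(x - a) \<bullet> (?n - b) = 0" if "x \<in> supp \<mu>" for x
  proof -
    have "AE y in \<nu>. (y - b) \<bullet> (x - a) = 0" using AEn ort[OF that] by (auto simp: inner_commute)
    then have "(\<integral>y. (y - b) \<bullet> (x - a) \<partial>\<nu>) = 0" by (rule integral_eq_zero_AE)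
    then show ?thesis using bary_int(2)[OF W(2), of b "x - a"] by (simp add: inner_commute)
  qed
  have "AE x in \<mu>. (x - a) \<bullet> (?n - b) = 0" using AEm z2 by auto
  then have "(\<integral>x. (x - a) \<bullet> (?n - b) \<partial>\<mu>) = 0" by (rule integral_eq_zero_AE)
  then have z3: "(?m - a) \<bullet> (?n - b) = 0" using bary_int(2)[OF W(1), of a "?n - b"] by simp
  show ?thesis using cpl_inner(2)[OF sep W pi, of a b] z1 z3 by simp
qed

lemma nonorth_imp_orth:
  fixes \<mu> \<nu> :: "'a::{real_inner,complete_space} measure"
  assumes sep: "separable_space TYPE('a)" and W: "\<mu> \<in> W2" "\<nu> \<in> W2"
    and H: "\<forall>\<pi>\<in>couplings \<mu> \<nu>. (\<integral>p. (fst p - bary \<mu>) \<bullet> (snd p - bary \<nu>) \<partial>\<pi>) \<le> 0"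
  shows "\<exists>a b L0 M0. subspace L0 \<and> closed L0 \<and> subspace M0 \<and> closed M0 \<and>
       (\<forall>u\<in>L0. \<forall>v\<in>M0. u \<bullet> v = 0) \<and>
       supp \<mu> \<subseteq> (\<lambda>x. a + x) ` L0 \<and> supp \<nu> \<subseteq> (\<lambda>x. b + x) ` M0"
proof -
  let ?m = "bary \<mu>" and ?n = "bary \<nu>"
  have key: "(x - ?m) \<bullet> (y - ?n) = 0" if "x \<in> supp \<mu>" "y \<in> supp \<nu>" for x y
    using pos_cov[OF sep W that] H by force
  define L0 where "L0 = {w. \<forall>y\<in>supp \<nu>. w \<bullet> (y - ?n) = 0}"
  define M0 where "M0 = {v. \<forall>w\<in>L0. w \<bullet> v = 0}"
  have sL: "subspace L0" unfolding L0_def subspace_def by (simp add: inner_add_left)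
  have sM: "subspace M0" unfolding M0_def subspace_def by (simp add: inner_add_right)
  have cL: "closed L0"
  proof -
    have "L0 = (\<Inter>y\<in>supp \<nu>. {w. w \<bullet> (y - ?n) = 0})" unfolding L0_def by auto
    moreover have "closed {w. w \<bullet> (y - ?n) = 0}" for y
      by (intro closed_Collect_eq continuous_intros)
    ultimately show ?thesis by auto
  qed
  have cM: "closed M0"
  proof -
    have "M0 = (\<Inter>w\<in>L0. {v. w \<bullet> v = 0})" unfolding M0_def by auto
    moreover have "closed {v. w \<bullet> v = 0}" for w :: 'a
      by (intro closed_Collect_eq continuous_intros)
    ultimately show ?thesis by auto
  qed
  have o: "\<forall>u\<in>L0. \<forall>v\<in>M0. u \<bullet> v = 0" unfolding M0_def by auto
  have s1: "supp \<mu> \<subseteq> (\<lambda>x. ?m + x) ` L0"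
  proof
    fix x assume x: "x \<in> supp \<mu>"
    have "x - ?m \<in> L0" unfolding L0_def using key[OF x] by auto
    moreover have "x = ?m + (x - ?m)" by simp
    ultimately show "x \<in> (\<lambda>x. ?m + x) ` L0" by blast
  qed
  have s2: "supp \<nu> \<subseteq> (\<lambda>x. ?n + x) ` M0"
  proof
    fix y assume y: "y \<in> supp \<nu>"
    have "y - ?n \<in> M0" unfolding M0_def L0_def using y by auto
    moreover have "y = ?n + (y - ?n)" by simp
    ultimately show "y \<in> (\<lambda>x. ?n + x) ` M0" by blast
  qed
  show ?thesis using sL cL sM cM o s1 s2 by blast
qed

theorem lemma3p15:
  fixes \<mu> \<nu> :: "'a::{real_inner, complete_space} measure"
  assumes "separable_space TYPE('a)"
    and "infinite_dimensional TYPE('a)"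
    and "\<mu> \<in> W2" and "\<nu> \<in> W2"
  defines "\<sigma> \<equiv> wdist \<mu> (return borel (bary \<mu>))"
    and "\<rho> \<equiv> wdist \<nu> (return borel (bary \<nu>))"
  shows "(wdist \<mu> \<nu>)^2 = (norm (bary \<mu> - bary \<nu>))^2 + \<sigma>^2 + \<rho>^2 \<longleftrightarrow>
    (\<exists>a b L0 M0. subspace L0 \<and> closed L0 \<and> subspace M0 \<and> closed M0 \<and>
       (\<forall>u\<in>L0. \<forall>v\<in>M0. u \<bullet> v = 0) \<and>
       supp \<mu> \<subseteq> (\<lambda>x. a + x) ` L0 \<and> supp \<nu> \<subseteq> (\<lambda>x. b + x) ` M0)"
proof -
  note sep = assms(1) and W = assms(3,4)
  let ?m = "bary \<mu>" and ?n = "bary \<nu>"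
  define S1 where "S1 = (\<integral>x. (norm (x - ?m))^2 \<partial>\<mu>)"
  define S2 where "S2 = (\<integral>y. (norm (y - ?n))^2 \<partial>\<nu>)"
  define K where "K = (norm (?m - ?n))^2 + S1 + S2"
  define C where "C \<pi> = (\<integral>p. (fst p - ?m) \<bullet> (snd p - ?n) \<partial>\<pi>)" for \<pi>
  have S10: "S1 \<ge> 0" unfolding S1_def by (rule integral_nonneg_AE) simp
  have S20: "S2 \<ge> 0" unfolding S2_def by (rule integral_nonneg_AE) simp
  have K0: "K \<ge> 0" unfolding K_def using S10 S20 by simp
  have sig: "\<sigma>^2 = S1" unfolding \<sigma>_def wdist_dirac[OF W(1)] S1_def[symmetric] using S10 by simp
  have rho: "\<rho>^2 = S2" unfolding \<rho>_def wdist_dirac[OF W(2)] S2_def[symmetric] using S20 by simp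
  have cost: "(\<integral>\<^sup>+p. ennreal ((norm (fst p - snd p))^2) \<partial>\<pi>) = ennreal (K - 2 * C \<pi>)" "0 \<le> K - 2 * C \<pi>"
    if "\<pi> \<in> couplings \<mu> \<nu>" for \<pi>
    using cpl_cost[OF sep W that] unfolding K_def S1_def S2_def C_def by simp_all
  define Wd where "Wd = (INF \<pi>\<in>couplings \<mu> \<nu>. \<integral>\<^sup>+ p. ennreal ((norm (fst p - snd p))^2) \<partial>\<pi>)"
  have wd2: "(wdist \<mu> \<nu>)^2 = enn2real Wd" unfolding wdist_def Wd_def by simp
  have Wd_eq: "Wd = (INF \<pi>\<in>couplings \<mu> \<nu>. ennreal (K - 2 * C \<pi>))"
    unfolding Wd_def by (rule INF_cong) (simp_all add: cost)
  have hU: "indicator (UNIV :: 'a set) \<in> borel_measurable (borel :: 'a measure)" by simp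
  obtain wA where wA: "\<forall>z. wA \<bullet> z = (\<integral>x. indicator UNIV x * (x \<bullet> z) \<partial>\<mu>)"
    using w2_vec[OF W(1) hU] by (auto simp: indicator_def)
  obtain wB where wB: "\<forall>z. wB \<bullet> z = (\<integral>x. indicator UNIV x * (x \<bullet> z) \<partial>\<nu>)"
    using w2_vec[OF W(2) hU] by (auto simp: indicator_def)
  define \<pi>0 where "\<pi>0 = density (\<mu> \<Otimes>\<^sub>M \<nu>)
      (\<lambda>p. ennreal (1 + 0 * (indicator UNIV (fst p) - measure \<mu> UNIV) * (indicator UNIV (snd p) - measure \<nu> UNIV)))"
  have p0: "\<pi>0 \<in> couplings \<mu> \<nu>" unfolding \<pi>0_def
    by (rule dens_cpl[OF W2D(2)[OF W(1)] W2D(2)[OF W(2)] W2D(1)[OF W(1)] W2D(1)[OF W(2)]]) auto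
  have C0: "C \<pi>0 = 0" unfolding C_def \<pi>0_def
    using dens_cov[OF sep W _ _ _ wA wB, of 0] by simp
  have Wle: "Wd \<le> ennreal K" unfolding Wd_eq using INF_lower[OF p0, of "\<lambda>\<pi>. ennreal (K - 2 * C \<pi>)"] C0 by simp
  have L1: "(wdist \<mu> \<nu>)^2 = K \<longleftrightarrow> (\<forall>\<pi>\<in>couplings \<mu> \<nu>. C \<pi> \<le> 0)"
  proof
    assume eq: "(wdist \<mu> \<nu>)^2 = K"
    show "\<forall>\<pi>\<in>couplings \<mu> \<nu>. C \<pi> \<le> 0"
    proof (rule ccontr)
      assume "\<not> (\<forall>\<pi>\<in>couplings \<mu> \<nu>. C \<pi> \<le> 0)"
      then obtain \<pi> where pi: "\<pi> \<in> couplings \<mu> \<nu>" "C \<pi> > 0" by force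
      have "Wd \<le> ennreal (K - 2 * C \<pi>)" unfolding Wd_eq by (rule INF_lower[OF pi(1)])
      then have "enn2real Wd \<le> enn2real (ennreal (K - 2 * C \<pi>))" by (intro enn2real_mono) auto
      then have "enn2real Wd \<le> K - 2 * C \<pi>" using cost(2)[OF pi(1)] by simp
      then show False using eq wd2 pi(2) by simp
    qed
  next
    assume H: "\<forall>\<pi>\<in>couplings \<mu> \<nu>. C \<pi> \<le> 0"
    have "ennreal K \<le> Wd" unfolding Wd_eq
    proof (rule INF_greatest)
      fix \<pi> assume "\<pi> \<in> couplings \<mu> \<nu>"
      then show "ennreal K \<le> ennreal (K - 2 * C \<pi>)" using H by (intro ennreal_leI) auto
    qed
    then have "Wd = ennreal K" using Wle by simp
    then show "(wdist \<mu> \<nu>)^2 = K" using wd2 K0 by simp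
  qed
  have L2: "(\<forall>\<pi>\<in>couplings \<mu> \<nu>. C \<pi> \<le> 0) \<longleftrightarrow>
    (\<exists>a b L0 M0. subspace L0 \<and> closed L0 \<and> subspace M0 \<and> closed M0 \<and>
       (\<forall>u\<in>L0. \<forall>v\<in>M0. u \<bullet> v = 0) \<and>
       supp \<mu> \<subseteq> (\<lambda>x. a + x) ` L0 \<and> supp \<nu> \<subseteq> (\<lambda>x. b + x) ` M0)"
  proof
    assume "\<forall>\<pi>\<in>couplings \<mu> \<nu>. C \<pi> \<le> 0"
    then show "\<exists>a b L0 M0. subspace L0 \<and> closed L0 \<and> subspace M0 \<and> closed M0 \<and>
       (\<forall>u\<in>L0. \<forall>v\<in>M0. u \<bullet> v = 0) \<and>
       supp \<mu> \<subseteq> (\<lambda>x. a + x) ` L0 \<and> supp \<nu> \<subseteq> (\<lambda>x. b + x) ` M0"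
      using nonorth_imp_orth[OF sep W] unfolding C_def by blast
  next
    assume "\<exists>a b L0 M0. subspace L0 \<and> closed L0 \<and> subspace M0 \<and> closed M0 \<and>
       (\<forall>u\<in>L0. \<forall>v\<in>M0. u \<bullet> v = 0) \<and>
       supp \<mu> \<subseteq> (\<lambda>x. a + x) ` L0 \<and> supp \<nu> \<subseteq> (\<lambda>x. b + x) ` M0"
    then obtain a b L0 M0 where o: "\<forall>u\<in>L0. \<forall>v\<in>M0. u \<bullet> v = 0"
      and s1: "supp \<mu> \<subseteq> (\<lambda>x. a + x) ` L0" and s2: "supp \<nu> \<subseteq> (\<lambda>x. b + x) ` M0" by blast
    show "\<forall>\<pi>\<in>couplings \<mu> \<nu>. C \<pi> \<le> 0"
      using orth_imp_zero[OF sep W o s1 s2] unfolding C_def by simp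
  qed
  have "(norm (bary \<mu> - bary \<nu>))^2 + \<sigma>^2 + \<rho>^2 = K" unfolding K_def sig rho ..
  then show ?thesis using L1 L2 by simp
qed

end
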